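(* In the linear setting of the context, suppose $f(\phi_{\min})<0$. Then the unique steady state $(\mathbf c^*,v^* )$ of the linear pump-leak system is asymptotically stable on $\mathcal S$, solutions starting in $\mathcal S$ sufficiently close to it converge to it exponentially fast, and the linearization of the system, regarded as an $N$-dimensional ODE on the manifold $\mathcal S$, at the steady state is diagonalizable with real negative eigenvalues.
   Context: Fix an integer $N\ge2$, real valences $z_1,\dots,z_N$ not all zero, $\mathbf z=(z_k)$, positive constants $c_k^{\rm e}$ with $\sum_kz_kc_k^{\rm e}=0$, $A>0$, $z\in\mathbb R$. Let $L$ be a real symmetric positive definite $N\times N$ matrix, $\mathbf p\in\mathbb R^N$ constant, $\zeta>0$, $\mathbf q=L^{-1}\mathbf p$, $f(\phi)=\sum_kc_k^{\rm e}(\exp(-q_k-z_k\phi)-1)$ with unique minimizer $\phi_{\min}$. For $\mathbf c\in(0,\infty)^N,v>0,\phi\in\mathbb R$: $\gamma_k=\ln(c_k/c_k^{\rm e})$, $\mu_k=\gamma_k+z_k\phi$, $\pi_{\rm w}=\sum_kc_k^{\rm e}-(\sum_kc_k+A/v)$. The linear pump-leak system is $\frac{d}{dt}(v\mathbf c)=-L\boldsymbol\mu-\mathbf p$, $0=\sum_kz_kc_k+zA/v$, $\frac{dv}{dt}=-\zeta\pi_{\rm w}$. Eliminating $\phi=-\langle\mathbf z,L\boldsymbol\gamma+\mathbf p\rangle/\langle\mathbf z,L\mathbf z\rangle$ it becomes an ODE for $(\mathbf c,v)$ on $\mathcal S=\{(\mathbf c,v)\in(0,\infty)^{N+1}:\sum_kz_kc_k+zA/v=0\}$,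 an $N$-dimensional manifold. A steady state is a point of $\mathcal S$ (with the corresponding $\phi$) where $L\boldsymbol\mu+\mathbf p=0$ and $\pi_{\rm w}=0$. It is stable if for every $\varepsilon>0$ there is $\delta>0$ such that every solution with initial value in $\mathcal S$ within distance $\delta$ of it stays within distance $\varepsilon$ for all $t\ge0$; asymptotically stable if moreover all solutions with initial value in $\mathcal S$ sufficiently close converge to it as $t\to\infty$. *)

theory Defs
  imports "HOL-Analysis.Analysis"
begin

text \<open>Ion index type 'n (N = CARD('n)), concentrations
  c :: real^'n, volume v :: real; a state is a pair (c, v) in R^N x R = R^(N+1)
  with the Euclidean (product) metric.  Parameters: valences z, equilibrium
  concentrations ce, impermeant amount A, impermeant valence zi, matrix L,
  pump vector p, water permeability zeta.\<close>

definition vsum :: "real^'n \<Rightarrow> real" where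
  "vsum c = (\<Sum>k\<in>UNIV. c $ k)"

definition gam :: "real^'n \<Rightarrow> real^'n \<Rightarrow> real^'n" where
  "gam ce c = (\<chi> k. ln (c $ k / ce $ k))"

definition phiE :: "real^'n \<Rightarrow> real^'n \<Rightarrow> real^'n^'n \<Rightarrow> real^'n \<Rightarrow> real^'n \<Rightarrow> real" where
  "phiE z ce L p c = - (z \<bullet> (L *v gam ce c + p)) / (z \<bullet> (L *v z))"

definition muv :: "real^'n \<Rightarrow> real^'n \<Rightarrow> real \<Rightarrow> real^'n \<Rightarrow> real^'n" where
  "muv z ce phi c = gam ce c + phi *\<^sub>R z"

definition piw :: "real^'n \<Rightarrow> real \<Rightarrow> real^'n \<Rightarrow> real \<Rightarrow> real" where
  "piw ce A c v = vsum ce - (vsum c + A / v)"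

definition PLdom :: "((real^'n) \<times> real) set" where
  "PLdom = {(c, v). (\<forall>k. 0 < c $ k) \<and> 0 < v}"

text \<open>The manifold S (electroneutrality constraint).\<close>
definition PLS :: "real^'n \<Rightarrow> real \<Rightarrow> real \<Rightarrow> ((real^'n) \<times> real) set" where
  "PLS z A zi = {(c, v) \<in> PLdom. z \<bullet> c + zi * A / v = 0}"

text \<open>Vector field of the ODE for (c, v) obtained from
  d/dt (v c) = - L mu - p,  dv/dt = - zeta pi_w, after eliminating phi:
  c' = (- L mu - p - v' c) / v.\<close>
definition PLfield :: "real^'n \<Rightarrow> real^'n \<Rightarrow> real \<Rightarrow> real^'n^'n \<Rightarrow> real^'n \<Rightarrow> real
    \<Rightarrow> (real^'n) \<times> real \<Rightarrow> (real^'n) \<times> real" where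
  "PLfield z ce A L p zeta = (\<lambda>(c, v).
     let phi = phiE z ce L p c; pw = piw ce A c v in
     ((1 / v) *\<^sub>R (- (L *v muv z ce phi c) - p + (zeta * pw) *\<^sub>R c), - zeta * pw))"

definition PLsteady :: "real^'n \<Rightarrow> real^'n \<Rightarrow> real \<Rightarrow> real \<Rightarrow> real^'n^'n \<Rightarrow> real^'n
    \<Rightarrow> (real^'n) \<times> real \<Rightarrow> bool" where
  "PLsteady z ce A zi L p s = (case s of (c, v) \<Rightarrow>
     s \<in> PLS z A zi \<and> L *v muv z ce (phiE z ce L p c) c + p = 0 \<and> piw ce A c v = 0)"

definition is_sol_on :: "('a::real_normed_vector \<Rightarrow> 'a) \<Rightarrow> 'a set \<Rightarrow> real set \<Rightarrow> (real \<Rightarrow> 'a) \<Rightarrow> bool" where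
  "is_sol_on F D I x = (\<forall>t\<in>I. x t \<in> D \<and> (x has_vector_derivative F (x t)) (at t within I))"

definition fwd_interval :: "real set \<Rightarrow> bool" where
  "fwd_interval I = (I = {0..} \<or> (\<exists>T>0. I = {0..<T}))"

definition stable_on :: "('a::real_normed_vector \<Rightarrow> 'a) \<Rightarrow> 'a set \<Rightarrow> 'a set \<Rightarrow> 'a \<Rightarrow> bool" where
  "stable_on F D S s = (\<forall>\<epsilon>>0. \<exists>\<delta>>0. \<forall>I x. fwd_interval I \<longrightarrow> is_sol_on F D I x \<longrightarrow>
      x 0 \<in> S \<longrightarrow> dist (x 0) s < \<delta> \<longrightarrow> (\<forall>t\<in>I. dist (x t) s < \<epsilon>))"

definition asymp_stable_on :: "('a::real_normed_vector \<Rightarrow> 'a) \<Rightarrow> 'a set \<Rightarrow> 'a set \<Rightarrow> 'a \<Rightarrow> bool" where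
  "asymp_stable_on F D S s = (stable_on F D S s \<and>
     (\<exists>\<delta>>0. \<forall>x. is_sol_on F D {0..} x \<longrightarrow> x 0 \<in> S \<longrightarrow> dist (x 0) s < \<delta> \<longrightarrow>
        (x \<longlongrightarrow> s) at_top))"

definition exp_convergent_on :: "('a::real_normed_vector \<Rightarrow> 'a) \<Rightarrow> 'a set \<Rightarrow> 'a set \<Rightarrow> 'a \<Rightarrow> bool" where
  "exp_convergent_on F D S s = (\<exists>\<delta>>0. \<exists>C \<kappa>. \<kappa> > 0 \<and>
     (\<forall>I x. fwd_interval I \<longrightarrow> is_sol_on F D I x \<longrightarrow> x 0 \<in> S \<longrightarrow> dist (x 0) s < \<delta> \<longrightarrow>
        (\<forall>t\<in>I. dist (x t) s \<le> C * exp (- \<kappa> * t) * dist (x 0) s)))"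

text \<open>Tangent space of S at (c, v): kernel of the derivative of the constraint
  g(c, v) = z . c + zi * A / v.\<close>
definition PLtangent :: "real^'n \<Rightarrow> real \<Rightarrow> real \<Rightarrow> (real^'n) \<times> real \<Rightarrow> ((real^'n) \<times> real) set" where
  "PLtangent z A zi s = {(dc, dv). z \<bullet> dc - zi * A / (snd s)\<^sup>2 * dv = 0}"

definition diag_neg_on :: "('a::real_vector \<Rightarrow> 'a) \<Rightarrow> 'a set \<Rightarrow> bool" where
  "diag_neg_on M T = (M ` T \<subseteq> T \<and>
     (\<exists>B. B \<subseteq> T \<and> independent B \<and> span B = T \<and> (\<forall>b\<in>B. \<exists>r<0. M b = r *\<^sub>R b)))"

definition fPL :: "real^'n \<Rightarrow> real^'n \<Rightarrow> real^'n^'n \<Rightarrow> real^'n \<Rightarrow> real \<Rightarrow> real" where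
  "fPL z ce L p phi = (\<Sum>k\<in>UNIV. ce $ k * (exp (- (matrix_inv L *v p) $ k - z $ k * phi) - 1))"

definition phi_min :: "real^'n \<Rightarrow> real^'n \<Rightarrow> real^'n^'n \<Rightarrow> real^'n \<Rightarrow> real" where
  "phi_min z ce L p = (THE phi. \<forall>psi. fPL z ce L p phi \<le> fPL z ce L p psi)"

end

theory Submission
  imports Defs
begin


lemma eig_exists:
  fixes M :: "'a::euclidean_space \<Rightarrow> 'a" and W :: "'a \<Rightarrow> 'b::euclidean_space"
  assumes lM: "linear M" and lW: "linear W" and iW: "\<And>x. W x = 0 \<Longrightarrow> x = 0"
    and sT: "subspace T" and MT: "M ` T \<subseteq> T"
    and sym: "\<forall>x\<in>T. \<forall>y\<in>T. W (M x) \<bullet> W y = W x \<bullet> W (M y)"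
    and ne: "x1 \<in> T" "x1 \<noteq> 0"
  shows "\<exists>x\<in>T. x \<noteq> 0 \<and> (\<exists>l. M x = l *\<^sub>R x)"
proof -
  define K where "K = T \<inter> sphere 0 1"
  define f where "f x = (W (M x) \<bullet> W x) / (W x \<bullet> W x)" for x
  have cK: "compact K" unfolding K_def
    by (metis Int_commute closed_subspace compact_Int_closed compact_sphere sT)
  have "x1 /\<^sub>R norm x1 \<in> K" using ne sT unfolding K_def
    by (simp add: subspace_scale)
  then have Kne: "K \<noteq> {}" by blast
  have bW: "bounded_linear W" and bM: "bounded_linear M"
    using lW lM linear_conv_bounded_linear by auto
  have cW: "continuous_on UNIV W" and cM: "continuous_on UNIV M"
    using bW bM linear_continuous_on by auto
  have Wpos: "W x \<bullet> W x > 0" if "x \<noteq> 0" for x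
    using iW that by auto
  have "continuous_on K f" unfolding f_def
    apply (rule continuous_on_divide)
      apply (intro continuous_intros continuous_on_compose2[OF cW] continuous_on_compose2[OF cM]; auto)
     apply (intro continuous_intros continuous_on_compose2[OF cW]; auto)
    using Wpos unfolding K_def by (metis IntD2 less_irrefl mem_sphere_0 norm_zero zero_neq_one)
  then obtain x0 where x0K: "x0 \<in> K" and x0max: "\<forall>y\<in>K. f y \<le> f x0"
    using continuous_attains_sup[OF cK Kne] by blast
  have x0T: "x0 \<in> T" and x0nz: "x0 \<noteq> 0" using x0K unfolding K_def by auto
  define lam where "lam = f x0"
  have scl: "W (M (c *\<^sub>R u)) = c *\<^sub>R W (M u)" "W (c *\<^sub>R u) = c *\<^sub>R W u" for c u
    using lW lM by (simp_all add: linear_scale)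
  have le: "W (M u) \<bullet> W u \<le> lam * (W u \<bullet> W u)" if uT: "u \<in> T" for u
  proof (cases "u = 0")
    case True then show ?thesis using lW lM by (simp add: linear_0)
  next
    case False
    define u' where "u' = u /\<^sub>R norm u"
    have "u' \<in> K" using uT False sT unfolding K_def u'_def by (simp add: subspace_scale)
    then have "f u' \<le> lam" using x0max lam_def by auto
    moreover have "f u' = f u"
    proof -
      have nz: "norm u \<noteq> 0" using False by simp
      have "f u' = ((W (M u) \<bullet> W u) / norm u ^ 2) / ((W u \<bullet> W u) / norm u ^ 2)"
        unfolding f_def u'_def scl by (simp add: power2_eq_square)
      also have "\<dots> = f u" unfolding f_def using nz by simp
      finally show ?thesis .
    qed
    ultimately have "f u \<le> lam" by simp
    then show ?thesis unfolding f_def using Wpos[OF False] by (simp add: divide_le_eq)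
  qed
  have eq0: "W (M x0) \<bullet> W x0 = lam * (W x0 \<bullet> W x0)"
    unfolding lam_def f_def using Wpos[OF x0nz] by simp
  define y where "y = M x0 - lam *\<^sub>R x0"
  have yT: "y \<in> T" unfolding y_def using MT x0T sT
    by (meson image_subset_iff subspace_diff subspace_scale)
  define a where "a = W x0"
  define b where "b = W y"
  define ma where "ma = W (M x0)"
  define mb where "mb = W (M y)"
  have ma: "ma = lam *\<^sub>R a + b" unfolding ma_def a_def b_def y_def using lW
    by (simp add: linear_diff linear_scale)
  have symab: "mb \<bullet> a = b \<bullet> ma" unfolding mb_def a_def b_def ma_def using sym yT x0T by auto
  have Rt: "- 2 * t * (b \<bullet> b) + t^2 * (lam * (b \<bullet> b) - mb \<bullet> b) \<ge> 0" for t
  proof -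
    have uT: "x0 + t *\<^sub>R y \<in> T" using x0T yT sT by (simp add: subspace_add subspace_scale)
    have WM: "W (M (x0 + t *\<^sub>R y)) = ma + t *\<^sub>R mb" "W (x0 + t *\<^sub>R y) = a + t *\<^sub>R b"
      unfolding ma_def mb_def a_def b_def using lW lM by (simp_all add: linear_add linear_scale)
    have "(ma + t *\<^sub>R mb) \<bullet> (a + t *\<^sub>R b) \<le> lam * ((a + t *\<^sub>R b) \<bullet> (a + t *\<^sub>R b))"
      using le[OF uT] unfolding WM .
    moreover have "ma \<bullet> a = lam * (a \<bullet> a)" using eq0 unfolding ma_def a_def .
    moreover have "(ma + t *\<^sub>R mb) \<bullet> (a + t *\<^sub>R b) = ma \<bullet> a + t * (ma \<bullet> b) + t * (mb \<bullet> a) + t * t * (mb \<bullet> b)"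
      by (simp add: inner_add_left inner_add_right algebra_simps)
    moreover have "(a + t *\<^sub>R b) \<bullet> (a + t *\<^sub>R b) = a \<bullet> a + 2 * t * (a \<bullet> b) + t * t * (b \<bullet> b)"
      by (simp add: inner_add_left inner_add_right algebra_simps inner_commute)
    moreover have "ma \<bullet> b = lam * (a \<bullet> b) + b \<bullet> b" unfolding ma by (simp add: inner_add_left)
    moreover have "mb \<bullet> a = lam * (a \<bullet> b) + b \<bullet> b" unfolding symab ma by (simp add: inner_add_right inner_commute)
    ultimately have "t * t * (mb \<bullet> b) + 2 * t * (b \<bullet> b) \<le> lam * (t * t * (b \<bullet> b))"
      by (simp add: algebra_simps inner_commute)
    then show ?thesis by (simp add: power2_eq_square algebra_simps)
  qed
  have "b \<bullet> b = 0"
  proof (rule ccontr)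
    assume "b \<bullet> b \<noteq> 0"
    then have Q: "b \<bullet> b > 0" by (simp add: order_less_le)
    define R where "R = lam * (b \<bullet> b) - mb \<bullet> b"
    define t where "t = (b \<bullet> b) / (\<bar>R\<bar> + 1)"
    have tpos: "t > 0" unfolding t_def using Q by simp
    have "t * \<bar>R\<bar> < b \<bullet> b" unfolding t_def using Q
      by (simp add: field_simps)
    then have "t * (t * \<bar>R\<bar>) < t * (b \<bullet> b)" using tpos by simp
    moreover have "t * (t * R) \<le> t * (t * \<bar>R\<bar>)" using tpos by simp
    ultimately have "t^2 * R < t * (b \<bullet> b)" by (simp add: power2_eq_square)
    moreover have "0 < t * (b \<bullet> b)" using tpos Q by simp
    ultimately have "- 2 * t * (b \<bullet> b) + t^2 * R < 0" by linarith
    then show False using Rt[of t] unfolding R_def by linarith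
  qed
  then have "y = 0" using iW unfolding b_def by simp
  then have "M x0 = lam *\<^sub>R x0" unfolding y_def by simp
  then show ?thesis using x0T x0nz by blast
qed

lemma diag_lemma:
  fixes M :: "'a::euclidean_space \<Rightarrow> 'a" and W :: "'a \<Rightarrow> 'b::euclidean_space"
  assumes lM: "linear M" and lW: "linear W" and iW: "\<And>x. W x = 0 \<Longrightarrow> x = 0"
  shows "subspace T \<Longrightarrow> M ` T \<subseteq> T \<Longrightarrow> (\<forall>x\<in>T. \<forall>y\<in>T. W (M x) \<bullet> W y = W x \<bullet> W (M y))
    \<Longrightarrow> (\<forall>x\<in>T. x \<noteq> 0 \<longrightarrow> W (M x) \<bullet> W x < 0)
    \<Longrightarrow> \<exists>B. B \<subseteq> T \<and> independent B \<and> span B = T \<and> (\<forall>b\<in>B. \<exists>r<0. M b = r *\<^sub>R b)"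
proof (induction "dim T" arbitrary: T rule: less_induct)
  case less
  note sT = less.prems(1) and MT = less.prems(2) and sym = less.prems(3) and neg = less.prems(4)
  show ?case
  proof (cases "T = {0}")
    case True
    then show ?thesis by (intro exI[of _ "{}"]) (auto simp: independent_empty)
  next
    case False
    then obtain x1 where x1: "x1 \<in> T" "x1 \<noteq> 0" using sT subspace_0 by blast
    obtain x0 l where x0T: "x0 \<in> T" and x0nz: "x0 \<noteq> 0" and eig: "M x0 = l *\<^sub>R x0"
      using eig_exists[OF lM lW iW sT MT sym x1] by blast
    have Wpos: "W x \<bullet> W x > 0" if "x \<noteq> 0" for x
      using iW that by auto
    have lneg: "l < 0"
    proof -
      have "W (M x0) \<bullet> W x0 < 0" using neg x0T x0nz by auto
      then have "l * (W x0 \<bullet> W x0) < 0" unfolding eig using lW by (simp add: linear_scale)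
      then show ?thesis using Wpos[OF x0nz] by (simp add: mult_less_0_iff)
    qed
    define T' where "T' = {y \<in> T. W x0 \<bullet> W y = 0}"
    have sT': "subspace T'" unfolding T'_def subspace_def using sT lW
      by (simp add: subspace_0 subspace_add subspace_scale linear_add linear_scale linear_0 inner_add_right)
    have MT': "M ` T' \<subseteq> T'"
    proof
      fix u assume "u \<in> M ` T'"
      then obtain y where y: "y \<in> T'" "u = M y" by blast
      have "W x0 \<bullet> W (M y) = W (M x0) \<bullet> W y" using sym x0T y(1) unfolding T'_def by auto
      also have "\<dots> = l * (W x0 \<bullet> W y)" unfolding eig using lW by (simp add: linear_scale)
      also have "\<dots> = 0" using y(1) unfolding T'_def by simp
      finally show "u \<in> T'" using y MT unfolding T'_def by auto
    qed
    have T'T: "T' \<subseteq> T" unfolding T'_def by auto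
    have x0T': "x0 \<notin> T'" unfolding T'_def using Wpos[OF x0nz] by simp
    have "dim T' < dim T"
    proof (rule dim_psubset)
      have e1: "span T' = T'" and e2: "span T = T" using sT sT' span_eq_iff by blast+
      show "span T' \<subset> span T" unfolding e1 e2 using T'T x0T x0T' by blast
    qed
    obtain B' where B': "B' \<subseteq> T'" "independent B'" "span B' = T'"
        "\<forall>b\<in>B'. \<exists>r<0. M b = r *\<^sub>R b"
    proof -
      have "\<forall>x\<in>T'. \<forall>y\<in>T'. W (M x) \<bullet> W y = W x \<bullet> W (M y)" using sym T'T by blast
      moreover have "\<forall>x\<in>T'. x \<noteq> 0 \<longrightarrow> W (M x) \<bullet> W x < 0" using neg T'T by blast
      ultimately show "(\<And>B'. B' \<subseteq> T' \<Longrightarrow> independent B' \<Longrightarrow> span B' = T' \<Longrightarrow>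
        \<forall>b\<in>B'. \<exists>r<0. M b = r *\<^sub>R b \<Longrightarrow> thesis) \<Longrightarrow> thesis"
        using less.hyps[OF \<open>dim T' < dim T\<close> sT' MT'] by blast
    qed
    show ?thesis
    proof (intro exI[of _ "insert x0 B'"] conjI)
      show "insert x0 B' \<subseteq> T" using B'(1) T'T x0T by auto
      show "independent (insert x0 B')"
        by (rule independent_insertI) (use B' x0T' in auto)
      show "\<forall>b\<in>insert x0 B'. \<exists>r<0. M b = r *\<^sub>R b" using B'(4) eig lneg by auto
      show "span (insert x0 B') = T"
      proof
        show "span (insert x0 B') \<subseteq> T" using B'(1) T'T x0T sT
          by (intro span_minimal) auto
        show "T \<subseteq> span (insert x0 B')"
        proof
          fix t assume tT: "t \<in> T"
          define c where "c = (W x0 \<bullet> W t) / (W x0 \<bullet> W x0)"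
          have "t - c *\<^sub>R x0 \<in> T'"
          proof -
            have "W x0 \<bullet> W (t - c *\<^sub>R x0) = W x0 \<bullet> W t - c * (W x0 \<bullet> W x0)"
              using lW by (simp add: linear_diff linear_scale inner_diff_right)
            also have "\<dots> = 0" unfolding c_def using Wpos[OF x0nz] by simp
            finally show ?thesis unfolding T'_def using tT x0T sT
              by (simp add: subspace_diff subspace_scale)
          qed
          then have "t - c *\<^sub>R x0 \<in> span (insert x0 B')" using B'(3)
            by (metis span_mono subset_insertI subsetD)
          moreover have "c *\<^sub>R x0 \<in> span (insert x0 B')" by (simp add: span_base span_scale)
          ultimately have "(t - c *\<^sub>R x0) + c *\<^sub>R x0 \<in> span (insert x0 B')" by (rule span_add)
          then show "t \<in> span (insert x0 B')" by simp
        qed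
      qed
    qed
  qed
qed




lemma fwd_interval_props:
  assumes "fwd_interval I"
  shows "0 \<in> I" "convex I" "\<And>t. t \<in> I \<Longrightarrow> 0 \<le> t" "\<And>t. t \<in> I \<Longrightarrow> {0..t} \<subseteq> I"
  using assms unfolding fwd_interval_def by (auto simp: convex_real_interval)

lemma lyap_exp:
  fixes V V' :: "real \<Rightarrow> real"
  assumes fI: "fwd_interval I"
    and der: "\<And>t. t \<in> I \<Longrightarrow> (V has_real_derivative V' t) (at t within I)"
    and dec: "\<And>t. t \<in> I \<Longrightarrow> V t < \<rho> \<Longrightarrow> V' t \<le> - \<kappa> * V t"
    and V0: "V 0 < \<rho>" and Vnn: "\<And>t. t \<in> I \<Longrightarrow> 0 \<le> V t" and kpos: "0 < \<kappa>"
  shows "\<And>t. t \<in> I \<Longrightarrow> V t \<le> V 0 * exp (- \<kappa> * t)"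
proof -
  note Ip = fwd_interval_props[OF fI]
  have derI: "(V has_derivative (\<lambda>h. h * V' x)) (at x within {0..t})" if "t \<in> I" "x \<in> {0..t}" for t x
  proof -
    have "x \<in> I" using Ip(4)[OF that(1)] that(2) by auto
    then have d1: "(V has_derivative (\<lambda>h. V' x * h)) (at x within I)"
      using der[of x] unfolding has_field_derivative_def by blast
    have e1: "(\<lambda>h. V' x * h) = (\<lambda>h. h * V' x)" by (rule ext) (rule mult.commute)
    from d1 have "(V has_derivative (\<lambda>h. h * V' x)) (at x within I)" unfolding e1 .
    then show ?thesis by (rule has_derivative_subset) (use Ip(4)[OF that(1)] in auto)
  qed
  have below: "V t < \<rho>" if tI: "t \<in> I" for t
  proof (rule ccontr)
    assume "\<not> V t < \<rho>"
    define C where "C = {x \<in> {0..t}. \<rho> \<le> V x}"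
    have contV: "continuous_on {0..t} V"
      by (rule has_derivative_continuous_on) (rule derI[OF tI])
    have "closed C" unfolding C_def
      by (rule continuous_on_closed_Collect_le) (auto intro: contV continuous_on_const)
    moreover have "bounded C" unfolding C_def by (rule bounded_subset[of "{0..t}"]) auto
    ultimately have cC: "compact C" by (simp add: compact_eq_bounded_closed)
    have "t \<in> C" unfolding C_def using Ip(3)[OF tI] \<open>\<not> V t < \<rho>\<close> by auto
    then obtain ts where tsC: "ts \<in> C" and tsmin: "\<forall>y\<in>C. ts \<le> y"
      using continuous_attains_inf[OF cC _ continuous_on_id] by blast
    have ts0: "0 \<le> ts" "ts \<le> t" "\<rho> \<le> V ts" using tsC unfolding C_def by auto
    have "ts \<noteq> 0" using ts0 V0 by auto
    then have tspos: "0 < ts" using ts0 by simp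
    have tsI: "ts \<in> I" using Ip(4)[OF tI] ts0 by auto
    have "\<exists>x\<in>{0<..<ts}. V ts - V 0 = (\<lambda>h. h * V' x) (ts - 0)"
      by (rule mvt_simple[OF tspos]) (rule derI[OF tsI], auto)
    then obtain x where x: "0 < x" "x < ts" and eq: "V ts - V 0 = ts * V' x" by auto
    have xI: "x \<in> I" using Ip(4)[OF tsI] x by auto
    have "V x < \<rho>"
    proof (rule ccontr)
      assume "\<not> V x < \<rho>"
      then have "x \<in> C" unfolding C_def using x ts0 by auto
      then show False using tsmin x(2) by (meson leD)
    qed
    then have "V' x \<le> - \<kappa> * V x" using dec xI by blast
    also have "\<dots> \<le> 0" using Vnn[OF xI] kpos by simp
    finally have "V' x \<le> 0" .
    then have "ts * V' x \<le> 0" using tspos by (meson less_imp_le mult_nonneg_nonpos)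
    then have "V ts \<le> V 0" using eq by simp
    then show False using ts0 V0 by simp
  qed
  fix t assume tI: "t \<in> I"
  define u where "u x = V x * exp (\<kappa> * x)" for x
  have uder: "(u has_derivative (\<lambda>h. h * (exp (\<kappa> * x) * (V' x + \<kappa> * V x)))) (at x within {0..t})"
    if "x \<in> {0..t}" for x
  proof -
    have xI: "x \<in> I" using Ip(4)[OF tI] that by auto
    have "(V has_real_derivative V' x) (at x within {0..t})"
    proof -
      have e1: "(\<lambda>h. V' x * h) = (\<lambda>h. h * V' x)" by (rule ext) (rule mult.commute)
      show ?thesis unfolding has_field_derivative_def e1 by (rule derI[OF tI that])
    qed
    then have "(u has_real_derivative (V' x * exp (\<kappa> * x) + V x * (exp (\<kappa> * x) * \<kappa>))) (at x within {0..t})"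
      unfolding u_def by (auto intro!: derivative_eq_intros)
    moreover have "V' x * exp (\<kappa> * x) + V x * (exp (\<kappa> * x) * \<kappa>) = exp (\<kappa> * x) * (V' x + \<kappa> * V x)"
      by (simp add: algebra_simps)
    ultimately have "(u has_real_derivative (exp (\<kappa> * x) * (V' x + \<kappa> * V x))) (at x within {0..t})" by simp
    moreover have "(\<lambda>h. (exp (\<kappa> * x) * (V' x + \<kappa> * V x)) * h) = (\<lambda>h. h * (exp (\<kappa> * x) * (V' x + \<kappa> * V x)))"
      by (rule ext) (rule mult.commute)
    ultimately show ?thesis unfolding has_field_derivative_def by simp
  qed
  have "u t \<le> u 0"
  proof (cases "t = 0")
    case True then show ?thesis by simp
  next
    case False
    then have tpos: "0 < t" using Ip(3)[OF tI] by simp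
    obtain x where x: "0 < x" "x < t" and eq: "u t - u 0 = (t - 0) * (exp (\<kappa> * x) * (V' x + \<kappa> * V x))"
      using mvt_simple[OF tpos, of u, OF uder] by auto
    have xI: "x \<in> I" using Ip(4)[OF tI] x by auto
    have "V' x + \<kappa> * V x \<le> 0" using dec[OF xI below[OF xI]] by simp
    then have "exp (\<kappa> * x) * (V' x + \<kappa> * V x) \<le> 0" by (simp add: mult_nonneg_nonpos)
    then have "(t - 0) * (exp (\<kappa> * x) * (V' x + \<kappa> * V x)) \<le> 0" using tpos
      by (simp add: mult_nonneg_nonpos)
    then show ?thesis using eq by simp
  qed
  then have "V t * exp (\<kappa> * t) \<le> V 0" unfolding u_def by simp
  then have m: "V t * exp (\<kappa> * t) * exp (- \<kappa> * t) \<le> V 0 * exp (- \<kappa> * t)"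
    by (rule mult_right_mono) simp
  have "exp (\<kappa> * t) * exp (- \<kappa> * t) = 1" by (simp add: exp_minus_inverse)
  then have e3: "V t * exp (\<kappa> * t) * exp (- \<kappa> * t) = V t" by (simp add: mult.assoc)
  show "V t \<le> V 0 * exp (- \<kappa> * t)" using m unfolding e3 .
qed




locale scal =
  fixes z ce qq :: "real^'n"
  assumes z_nz: "z \<noteq> 0"
    and ce_pos: "\<forall>k. 0 < ce $ k"
    and ce_neutral: "(\<Sum>k\<in>UNIV. z $ k * ce $ k) = 0"
begin

definition F :: "real \<Rightarrow> real" where
  "F phi = (\<Sum>k\<in>UNIV. ce $ k * (exp (- qq $ k - z $ k * phi) - 1))"
definition F1 :: "real \<Rightarrow> real" where
  "F1 phi = - (\<Sum>k\<in>UNIV. ce $ k * z $ k * exp (- qq $ k - z $ k * phi))"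
definition F2 :: "real \<Rightarrow> real" where
  "F2 phi = (\<Sum>k\<in>UNIV. ce $ k * (z $ k)^2 * exp (- qq $ k - z $ k * phi))"

lemma F_deriv: "(F has_real_derivative F1 x) (at x)"
proof -
  have "(F has_real_derivative (\<Sum>k\<in>UNIV. ce $ k * (exp (- qq $ k - z $ k * x) * (- z $ k)))) (at x)"
    unfolding F_def by (auto intro!: derivative_eq_intros sum.cong simp: mult_ac)
  moreover have "(\<Sum>k\<in>UNIV. ce $ k * (exp (- qq $ k - z $ k * x) * (- z $ k))) = F1 x"
    unfolding F1_def sum_negf[symmetric] by (rule sum.cong) (simp_all add: algebra_simps)
  ultimately show ?thesis by simp
qed

lemma F1_deriv: "(F1 has_real_derivative F2 x) (at x)"
proof -
  have "(F1 has_real_derivative - (\<Sum>k\<in>UNIV. ce $ k * z $ k * (exp (- qq $ k - z $ k * x) * (- z $ k)))) (at x)"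
    unfolding F1_def by (auto intro!: derivative_eq_intros sum.cong simp: mult_ac)
  moreover have "- (\<Sum>k\<in>UNIV. ce $ k * z $ k * (exp (- qq $ k - z $ k * x) * (- z $ k))) = F2 x"
    unfolding F2_def sum_negf[symmetric] by (rule sum.cong) (simp_all add: algebra_simps power2_eq_square)
  ultimately show ?thesis by simp
qed

lemma exists_nz: "\<exists>k. z $ k \<noteq> 0"
  using z_nz by (metis vec_eq_iff zero_index)

lemma F2_pos: "F2 x > 0"
proof -
  obtain k where k: "z $ k \<noteq> 0" using exists_nz by blast
  have "0 < ce $ k * (z $ k)^2 * exp (- qq $ k - z $ k * x)" using k ce_pos by simp
  also have "\<dots> \<le> F2 x" unfolding F2_def
  proof (rule member_le_sum)
    fix i assume "i \<in> UNIV - {k}"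
    have "0 \<le> ce $ i" using ce_pos by (simp add: less_imp_le)
    then show "0 \<le> ce $ i * (z $ i)^2 * exp (- qq $ i - z $ i * x)" by simp
  qed simp_all
  finally show ?thesis .
qed

lemma neg_exists: "\<exists>j. z $ j < 0"
proof (rule ccontr)
  assume "\<not> ?thesis"
  then have nn: "\<forall>j. 0 \<le> z $ j * ce $ j" using ce_pos by (metis less_imp_le mult_nonneg_nonneg not_less)
  then have "\<forall>j. z $ j * ce $ j = 0" using ce_neutral sum_nonneg_eq_0_iff[of UNIV "\<lambda>j. z $ j * ce $ j"] by auto
  then have "\<forall>j. z $ j = 0" using ce_pos by (metis less_irrefl mult_eq_0_iff)
  then show False using exists_nz by blast
qed

lemma pos_exists: "\<exists>j. z $ j > 0"
proof (rule ccontr)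
  assume "\<not> ?thesis"
  then have nn: "\<forall>j. 0 \<le> - (z $ j * ce $ j)" using ce_pos by (metis less_imp_le mult_nonpos_nonneg not_less neg_0_le_iff_le)
  have "(\<Sum>j\<in>UNIV. - (z $ j * ce $ j)) = 0" using ce_neutral by (simp add: sum_negf)
  then have "\<forall>j. - (z $ j * ce $ j) = 0" using nn sum_nonneg_eq_0_iff[of UNIV "\<lambda>j. - (z $ j * ce $ j)"] by auto
  then have "\<forall>j. z $ j = 0" using ce_pos by (metis less_irrefl mult_eq_0_iff neg_equal_0_iff_equal)
  then show False using exists_nz by blast
qed

lemma F_lower: "F x \<ge> ce $ j * exp (- qq $ j - z $ j * x) - (\<Sum>k\<in>UNIV. ce $ k)"
proof -
  have "F x = (\<Sum>k\<in>UNIV. ce $ k * exp (- qq $ k - z $ k * x)) - (\<Sum>k\<in>UNIV. ce $ k)"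
    unfolding F_def by (simp add: right_diff_distrib sum_subtractf)
  moreover have "ce $ j * exp (- qq $ j - z $ j * x) \<le> (\<Sum>k\<in>UNIV. ce $ k * exp (- qq $ k - z $ k * x))"
    by (rule member_le_sum) (use ce_pos in \<open>auto intro: less_imp_le\<close>)
  ultimately show ?thesis by simp
qed

lemma F_big: assumes "z $ j \<noteq> 0" and "x * (- z $ j) \<ge> ln ((\<Sum>k\<in>UNIV. ce $ k) / ce $ j) + qq $ j"
  shows "F x \<ge> 0"
proof -
  define S where "S = (\<Sum>k\<in>UNIV. ce $ k)"
  have Spos: "S > 0" unfolding S_def using ce_pos by (simp add: sum_pos)
  have cj: "ce $ j > 0" using ce_pos by simp
  have "ln (S / ce $ j) \<le> - qq $ j - z $ j * x" using assms(2) unfolding S_def by (simp add: algebra_simps)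
  then have "S / ce $ j \<le> exp (- qq $ j - z $ j * x)"
    using Spos cj by (metis divide_pos_pos exp_le_cancel_iff exp_ln)
  then have "S \<le> ce $ j * exp (- qq $ j - z $ j * x)" using cj by (simp add: divide_le_eq mult.commute)
  then show ?thesis using F_lower[where x=x and j=j] unfolding S_def by simp
qed

lemma F_cont: "continuous_on X F"
  using F_deriv by (meson DERIV_continuous continuous_at_imp_continuous_on)

lemma root_exists:
  assumes pm: "F pm < 0"
  shows "\<exists>ph. F ph < 0 \<and> F1 ph + zi * F ph = 0"
proof -
  obtain j where j: "z $ j < 0" using neg_exists by blast
  obtain k where k: "z $ k > 0" using pos_exists by blast
  define S where "S = (\<Sum>k\<in>UNIV. ce $ k)"
  define Xj where "Xj = (ln (S / ce $ j) + qq $ j) / (- z $ j)"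
  define Xk where "Xk = (ln (S / ce $ k) + qq $ k) / (- z $ k)"
  define b where "b = max pm Xj"
  define a where "a = min pm Xk"
  have Fb: "F b \<ge> 0"
  proof (rule F_big[of j])
    show "z $ j \<noteq> 0" using j by simp
    have "Xj * (- z $ j) \<le> b * (- z $ j)" unfolding b_def using j by (simp add: mult_right_mono)
    moreover have "Xj * (- z $ j) = ln (S / ce $ j) + qq $ j" unfolding Xj_def using j by simp
    ultimately show "b * (- z $ j) \<ge> ln ((\<Sum>k\<in>UNIV. ce $ k) / ce $ j) + qq $ j" unfolding S_def by simp
  qed
  have Fa: "F a \<ge> 0"
  proof (rule F_big[of k])
    show "z $ k \<noteq> 0" using k by simp
    have "a \<le> Xk" unfolding a_def by simp
    then have "Xk * (- z $ k) \<le> a * (- z $ k)" using k by (simp add: mult_right_mono_neg)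
    moreover have "Xk * (- z $ k) = ln (S / ce $ k) + qq $ k" unfolding Xk_def using k by simp
    ultimately show "a * (- z $ k) \<ge> ln ((\<Sum>k\<in>UNIV. ce $ k) / ce $ k) + qq $ k" unfolding S_def by simp
  qed
  define H where "H x = exp (zi * x) * F x" for x
  have Hd: "(H has_real_derivative (exp (zi * x) * (F1 x + zi * F x))) (at x)" for x
  proof -
    have "(H has_real_derivative (exp (zi * x) * zi * F x + exp (zi * x) * F1 x)) (at x)"
      unfolding H_def by (auto intro!: derivative_eq_intros F_deriv simp: algebra_simps)
    then show ?thesis by (simp add: algebra_simps)
  qed
  have Hc: "continuous_on {a..b} H"
    using Hd by (meson DERIV_continuous continuous_at_imp_continuous_on)
  have ab: "a \<le> pm" "pm \<le> b" unfolding a_def b_def by auto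
  then have "{a..b} \<noteq> {}" by auto
  then obtain ph where ph: "ph \<in> {a..b}" and phmin: "\<forall>y\<in>{a..b}. H ph \<le> H y"
    using continuous_attains_inf[OF compact_Icc _ Hc] by blast
  have "H ph \<le> H pm" using phmin ab by auto
  also have "H pm < 0" unfolding H_def using pm by (simp add: mult_pos_neg)
  finally have Hph: "H ph < 0" .
  have "H a \<ge> 0" "H b \<ge> 0" unfolding H_def using Fa Fb by simp_all
  then have "ph \<noteq> a" "ph \<noteq> b" using Hph by auto
  then have phab: "a < ph" "ph < b" using ph by auto
  have "exp (zi * ph) * (F1 ph + zi * F ph) = 0"
  proof (rule DERIV_local_min[OF Hd])
    show "0 < min (ph - a) (b - ph)" using phab by simp
    show "\<forall>y. \<bar>ph - y\<bar> < min (ph - a) (b - ph) \<longrightarrow> H ph \<le> H y"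
      using phmin by (auto simp: abs_less_iff)
  qed
  then have "F1 ph + zi * F ph = 0" by simp
  moreover have "F ph < 0" using Hph unfolding H_def by (simp add: mult_less_0_iff)
  ultimately show ?thesis by blast
qed

lemma F_convex: "convex_on UNIV F"
  by (rule f''_ge0_imp_convex[OF convex_UNIV F_deriv F1_deriv]) (simp add: less_imp_le F2_pos)

lemma root_unique_aux:
  assumes p12: "p1 < p2" and F1n: "F p1 < 0" and F2n: "F p2 < 0"
    and r1: "F1 p1 + zi * F p1 = 0" and r2: "F1 p2 + zi * F p2 = 0"
  shows False
proof -
  have neg: "F x < 0" if "p1 \<le> x" "x \<le> p2" for x
  proof -
    have cv: "convex_on {p1..p2} F" using F_convex convex_on_subset by blast
    have le: "F x \<le> (F p2 - F p1) / (p2 - p1) * (x - p1) + F p1"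
      using convex_onD_Icc'[OF cv] that by auto
    define t where "t = (x - p1) / (p2 - p1)"
    have t01: "0 \<le> t" "t \<le> 1" unfolding t_def using that p12 by auto
    have "(F p2 - F p1) / (p2 - p1) * (x - p1) + F p1 = t * F p2 + (1 - t) * F p1"
    proof -
      have "t * F p2 + (1 - t) * F p1 = F p1 + t * (F p2 - F p1)" by (simp add: algebra_simps)
      moreover have "t * (F p2 - F p1) = (F p2 - F p1) / (p2 - p1) * (x - p1)" unfolding t_def by simp
      ultimately show ?thesis by simp
    qed
    also have "\<dots> < 0"
    proof (cases "t = 0")
      case True then show ?thesis using F1n by simp
    next
      case False
      then have "t * F p2 < 0" using t01 F2n by (simp add: mult_pos_neg)
      moreover have "(1 - t) * F p1 \<le> 0" using t01 F1n by (simp add: mult_nonneg_nonpos)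
      ultimately show ?thesis by linarith
    qed
    finally show ?thesis using le by linarith
  qed
  define R where "R x = F1 x / F x" for x
  have Rd: "(R has_real_derivative ((F2 x * F x - F1 x * F1 x) / (F x * F x))) (at x)"
    if "p1 \<le> x" "x \<le> p2" for x
    unfolding R_def by (rule DERIV_divide[OF F1_deriv F_deriv]) (use neg[OF that] in simp)
  obtain xi where xi: "p1 < xi" "xi < p2"
    and eq: "R p2 - R p1 = (p2 - p1) * ((F2 xi * F xi - F1 xi * F1 xi) / (F xi * F xi))"
    using MVT2[OF p12 Rd] by blast
  have Fxi: "F xi < 0" using neg xi by simp
  have "F2 xi * F xi < 0" using F2_pos Fxi by (simp add: mult_pos_neg)
  moreover have "0 \<le> F1 xi * F1 xi" by simp
  ultimately have "F2 xi * F xi - F1 xi * F1 xi < 0" by linarith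
  moreover have "0 < F xi * F xi" using Fxi by (simp add: mult_neg_neg)
  ultimately have "(F2 xi * F xi - F1 xi * F1 xi) / (F xi * F xi) < 0" by (simp add: divide_neg_pos)
  then have "(p2 - p1) * ((F2 xi * F xi - F1 xi * F1 xi) / (F xi * F xi)) < 0" using p12
    by (intro mult_pos_neg) simp_all
  then have "R p2 - R p1 < 0" unfolding eq .
  moreover have "R p1 = - zi" "R p2 = - zi" unfolding R_def using r1 r2 F1n F2n
    by (simp_all add: field_simps)
  ultimately show False by simp
qed

lemma root_unique:
  assumes "F p1 < 0" "F p2 < 0" "F1 p1 + zi * F p1 = 0" "F1 p2 + zi * F p2 = 0"
  shows "p1 = p2"
  using root_unique_aux[of p1 p2 zi] root_unique_aux[of p2 p1 zi] assms
  by (metis linorder_neqE_linordered_idom)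

end



lemma mv_add: "(M::real^'n^'m) *v (x + y) = M *v x + M *v y"
  using linear_add[OF matrix_vector_mul_linear] by blast
lemma mv_diff: "(M::real^'n^'m) *v (x - y) = M *v x - M *v y"
  using linear_diff[OF matrix_vector_mul_linear] by blast
lemma mv_neg: "(M::real^'n^'m) *v (- x) = - (M *v x)"
  using linear_neg[OF matrix_vector_mul_linear] by blast
lemma mv_scale: "(M::real^'n^'m) *v (c *\<^sub>R x) = c *\<^sub>R (M *v x)"
  by (rule matrix_vector_mult_scaleR)

lemma vec_deriv:
  fixes f f' :: "'a::real_normed_vector \<Rightarrow> real^'n"
  assumes "\<And>i. ((\<lambda>x. f x $ i) has_derivative (\<lambda>h. f' h $ i)) (at a within S)"
  shows "(f has_derivative f') (at a within S)"
proof -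
  have "\<forall>b\<in>Basis. ((\<lambda>x. f x \<bullet> b) has_derivative (\<lambda>x. f' x \<bullet> b)) (at a within S)"
  proof
    fix b :: "real^'n" assume "b \<in> Basis"
    then obtain i where b: "b = axis i 1" unfolding Basis_vec_def by auto
    show "((\<lambda>x. f x \<bullet> b) has_derivative (\<lambda>x. f' x \<bullet> b)) (at a within S)"
      unfolding b inner_axis using assms[of i] by simp
  qed
  then show ?thesis using has_derivative_componentwise_within by blast
qed

locale PL =
  fixes z ce p :: "real^'n" and L :: "real^'n^'n" and A zi zeta :: real
  assumes z_nz: "z \<noteq> 0"
    and ce_pos: "\<forall>k. 0 < ce $ k"
    and ce_neutral: "(\<Sum>k\<in>UNIV. z $ k * ce $ k) = 0"
    and A_pos: "0 < A"
    and L_sym: "transpose L = L"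
    and L_pd: "\<forall>x. x \<noteq> 0 \<longrightarrow> 0 < x \<bullet> (L *v x)"
    and zeta_pos: "0 < zeta"
    and fmin_neg: "fPL z ce L p (phi_min z ce L p) < 0"
begin

definition q0 where "q0 = matrix_inv L *v p"

sublocale scal z ce q0
  by unfold_locales (use z_nz ce_pos ce_neutral in auto)

lemma fPL_F: "fPL z ce L p = F"
  unfolding fPL_def F_def by (rule ext) (simp add: q0_def)

lemma L_symm: "x \<bullet> (L *v y) = (L *v x) \<bullet> y"
proof -
  have "x \<bullet> (L *v y) = (x v* L) \<bullet> y" by (simp add: dot_lmul_matrix)
  also have "x v* L = transpose L *v x" by simp
  also have "\<dots> = L *v x" using L_sym by simp
  finally show ?thesis .
qed

lemma L_inj: "L *v x = 0 \<Longrightarrow> x = 0"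
  using L_pd by (metis inner_zero_right less_irrefl)

lemma L_inv: "L ** matrix_inv L = mat 1" "matrix_inv L ** L = mat 1"
proof -
  have "\<exists>B. B ** L = mat 1" using L_inj matrix_left_invertible_ker by blast
  then have "invertible L" using invertible_left_inverse by blast
  then have "\<exists>A'. L ** A' = mat 1 \<and> A' ** L = mat 1" unfolding invertible_def .
  then have "L ** matrix_inv L = mat 1 \<and> matrix_inv L ** L = mat 1"
    unfolding matrix_inv_def by (rule someI_ex)
  then show "L ** matrix_inv L = mat 1" "matrix_inv L ** L = mat 1" by auto
qed

lemma L_q0: "L *v q0 = p"
  unfolding q0_def by (simp add: matrix_vector_mul_assoc L_inv)

lemma L_solve: "L *v x = - p \<Longrightarrow> x = - q0"
proof -
  assume h: "L *v x = - p"
  have "x = matrix_inv L *v (L *v x)" by (simp add: matrix_vector_mul_assoc L_inv)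
  also have "\<dots> = - q0" unfolding h q0_def by (simp add: mv_neg)
  finally show ?thesis .
qed

definition dz where "dz = z \<bullet> (L *v z)"
lemma dz_pos: "dz > 0" unfolding dz_def using L_pd z_nz by blast

definition cphi :: "real \<Rightarrow> real^'n" where
  "cphi ph = (\<chi> k. ce $ k * exp (- q0 $ k - z $ k * ph))"

lemma cphi_pos: "cphi ph $ k > 0" unfolding cphi_def using ce_pos by simp

lemma vsum_cphi: "vsum (cphi ph) - vsum ce = F ph"
  unfolding vsum_def cphi_def F_def by (simp add: sum_subtractf[symmetric] algebra_simps)

lemma z_cphi: "z \<bullet> cphi ph = - F1 ph"
  unfolding cphi_def F1_def inner_vec_def sum_negf[symmetric]
  by (simp add: algebra_simps)

lemma gam_cphi: "gam ce (cphi ph) = - q0 - ph *\<^sub>R z"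
  unfolding gam_def cphi_def using ce_pos by (simp add: vec_eq_iff) (metis less_irrefl)

lemma phiE_cphi: "phiE z ce L p (cphi ph) = ph"
proof -
  have "L *v gam ce (cphi ph) + p = - (ph *\<^sub>R (L *v z))"
    unfolding gam_cphi by (simp add: mv_diff mv_neg mv_scale L_q0)
  then show ?thesis unfolding phiE_def using dz_pos unfolding dz_def by simp
qed

lemma muv_cphi: "muv z ce (phiE z ce L p (cphi ph)) (cphi ph) = - q0"
  unfolding muv_def phiE_cphi gam_cphi by simp

definition phs where "phs = (SOME ph. F ph < 0 \<and> F1 ph + zi * F ph = 0)"

lemma phs: "F phs < 0" "F1 phs + zi * F phs = 0"
proof -
  have "F (phi_min z ce L p) < 0" using fmin_neg unfolding fPL_F .
  then have "\<exists>ph. F ph < 0 \<and> F1 ph + zi * F ph = 0" by (rule root_exists)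
  then have "F phs < 0 \<and> F1 phs + zi * F phs = 0" unfolding phs_def by (rule someI_ex)
  then show "F phs < 0" "F1 phs + zi * F phs = 0" by auto
qed

definition cs where "cs = cphi phs"
definition vs where "vs = - A / F phs"
definition sst where "sst = (cs, vs)"

lemma cs_pos: "cs $ k > 0" unfolding cs_def by (rule cphi_pos)
lemma vs_pos: "vs > 0" unfolding vs_def using phs A_pos by (simp add: divide_pos_neg)
lemma A_vs: "A / vs = - F phs" unfolding vs_def using phs A_pos by simp

lemma z_cs: "z \<bullet> cs = - zi * A / vs"
proof -
  have "zi * A / vs = zi * (A / vs)" by simp
  then show ?thesis using z_cphi[of phs] phs(2) A_vs unfolding cs_def by (simp add: algebra_simps)
qed

lemma sst_S: "sst \<in> PLS z A zi"
  unfolding sst_def PLS_def PLdom_def using cs_pos vs_pos z_cs by auto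

lemma phiE_cs: "phiE z ce L p cs = phs" unfolding cs_def by (rule phiE_cphi)

lemma Lmu_cs: "L *v muv z ce (phiE z ce L p cs) cs + p = 0"
  unfolding cs_def muv_cphi by (simp add: mv_neg L_q0)

lemma piw_cs: "piw ce A cs vs = 0"
  using vsum_cphi[of phs] A_vs unfolding piw_def cs_def by simp

lemma steady: "PLsteady z ce A zi L p sst"
  unfolding PLsteady_def using sst_S Lmu_cs piw_cs by (simp add: sst_def)

lemma steady_unique:
  assumes st: "PLsteady z ce A zi L p s'"
  shows "s' = sst"
proof -
  obtain c' v' where s': "s' = (c', v')" by (cases s')
  have inS: "(c', v') \<in> PLS z A zi" and Lm: "L *v muv z ce (phiE z ce L p c') c' + p = 0"
    and pw: "piw ce A c' v' = 0"
    using st unfolding PLsteady_def s' by auto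
  have cpos: "\<forall>k. 0 < c' $ k" and vpos: "0 < v'" and con: "z \<bullet> c' + zi * A / v' = 0"
    using inS unfolding PLS_def PLdom_def by auto
  define ph where "ph = phiE z ce L p c'"
  have "L *v muv z ce ph c' = - p" using Lm unfolding ph_def by (simp add: eq_neg_iff_add_eq_0)
  then have mu: "muv z ce ph c' = - q0" by (rule L_solve)
  have c'eq: "c' = cphi ph"
  proof -
    have "gam ce c' = - q0 - ph *\<^sub>R z" using mu unfolding muv_def by (simp add: algebra_simps)
    then have "\<forall>k. ln (c' $ k / ce $ k) = - q0 $ k - z $ k * ph" unfolding gam_def
      by (simp add: vec_eq_iff)
    then have "\<forall>k. c' $ k = ce $ k * exp (- q0 $ k - z $ k * ph)"
      using cpos ce_pos by (metis divide_pos_pos exp_ln nonzero_mult_div_cancel_left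
          less_irrefl times_divide_eq_right)
    then show ?thesis unfolding cphi_def by (simp add: vec_eq_iff)
  qed
  have Av: "A / v' = - F ph" using pw vsum_cphi[of ph] unfolding piw_def c'eq by simp
  then have Fn: "F ph < 0" using A_pos vpos by (metis divide_pos_pos neg_0_less_iff_less)
  have "zi * A / v' = zi * (A / v')" by simp
  then have r: "F1 ph + zi * F ph = 0" using con z_cphi[of ph] Av unfolding c'eq
    by (simp add: algebra_simps)
  have "ph = phs" using root_unique[OF Fn phs(1) r phs(2)] .
  then have "c' = cs" "v' = vs" using c'eq Av A_vs vpos vs_pos A_pos unfolding cs_def
    by (auto simp: field_simps)
  then show ?thesis unfolding s' sst_def by simp
qed


definition dgam :: "real^'n \<Rightarrow> real^'n" where "dgam a = (\<chi> k. a $ k / cs $ k)"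
definition dphi :: "real^'n \<Rightarrow> real" where "dphi a = - (z \<bullet> (L *v dgam a)) / dz"
definition dmu :: "real^'n \<Rightarrow> real^'n" where "dmu a = dgam a + dphi a *\<^sub>R z"
definition dpi :: "(real^'n) \<times> real \<Rightarrow> real" where "dpi w = - vsum (fst w) + A / vs^2 * snd w"
definition Fd :: "(real^'n) \<times> real \<Rightarrow> (real^'n) \<times> real" where
  "Fd w = ((1 / vs) *\<^sub>R (- (L *v dmu (fst w)) + (zeta * dpi w) *\<^sub>R cs), - zeta * dpi w)"

lemma fst_nth_deriv: "((\<lambda>x::(real^'n) \<times> real. fst x $ i) has_derivative (\<lambda>x. fst x $ i)) F'"
  by (rule bounded_linear_imp_has_derivative)
     (rule bounded_linear_compose[OF bounded_linear_vec_nth bounded_linear_fst])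

lemma gam_deriv: "((\<lambda>x. gam ce (fst x)) has_derivative (\<lambda>h. dgam (fst h))) (at sst)"
proof (rule vec_deriv)
  fix i
  have "((\<lambda>x. ln (fst x $ i / ce $ i)) has_derivative (\<lambda>h. fst h $ i / cs $ i)) (at sst)"
  proof -
    have ci: "ce $ i \<noteq> 0" using ce_pos by (metis less_irrefl)
    show ?thesis
      using cs_pos[of i] ce_pos unfolding sst_def
      by (auto intro!: derivative_eq_intros fst_nth_deriv simp: ci fun_eq_iff)
  qed
  then show "((\<lambda>x. gam ce (fst x) $ i) has_derivative (\<lambda>h. dgam (fst h) $ i)) (at sst)"
    unfolding gam_def dgam_def by simp
qed

lemma Lgam_deriv: "((\<lambda>x. L *v gam ce (fst x)) has_derivative (\<lambda>h. L *v dgam (fst h))) (at sst)"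
  using has_derivative_compose[OF gam_deriv bounded_linear_imp_has_derivative[OF matrix_vector_mul_bounded_linear[of L]]] .

lemma zLgam_deriv: "((\<lambda>x. z \<bullet> (L *v gam ce (fst x))) has_derivative (\<lambda>h. z \<bullet> (L *v dgam (fst h)))) (at sst)"
  using has_derivative_compose[OF Lgam_deriv bounded_linear_imp_has_derivative[OF bounded_linear_inner_right[of z]]] .

lemma phi_deriv: "((\<lambda>x. phiE z ce L p (fst x)) has_derivative (\<lambda>h. dphi (fst h))) (at sst)"
proof -
  have e: "(\<lambda>x. phiE z ce L p (fst x)) = (\<lambda>x. (- 1 / dz) * (z \<bullet> (L *v gam ce (fst x))) + (- (z \<bullet> p) / dz))"
  proof (rule ext)
    fix x
    have g: "- (a + b) / d = (- 1 / d) * a + (- b / d)" for a b d :: real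
      by (cases "d = 0") (simp_all add: field_simps)
    show "phiE z ce L p (fst x) = (- 1 / dz) * (z \<bullet> (L *v gam ce (fst x))) + (- (z \<bullet> p) / dz)"
      unfolding phiE_def dz_def inner_add_right by (rule g)
  qed
  have e2: "(\<lambda>h. dphi (fst h)) = (\<lambda>h. (- 1 / dz) * (z \<bullet> (L *v dgam (fst h))))"
    unfolding dphi_def by (rule ext) simp
  show ?thesis unfolding e e2
    by (rule has_derivative_add_const) (rule has_derivative_mult_right[OF zLgam_deriv])
qed

lemma phiz_deriv: "((\<lambda>x. phiE z ce L p (fst x) *\<^sub>R z) has_derivative (\<lambda>h. dphi (fst h) *\<^sub>R z)) (at sst)"
  by (rule has_derivative_scaleR_left[OF phi_deriv])

lemma mu_deriv: "((\<lambda>x. muv z ce (phiE z ce L p (fst x)) (fst x)) has_derivative (\<lambda>h. dmu (fst h))) (at sst)"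
  unfolding muv_def dmu_def
  by (rule has_derivative_add[OF gam_deriv phiz_deriv])

lemma vsum_deriv: "((\<lambda>x::(real^'n) \<times> real. vsum (fst x)) has_derivative (\<lambda>h. vsum (fst h))) F'"
  unfolding vsum_def
  by (rule has_derivative_sum) (rule fst_nth_deriv)

lemma inv_deriv: "((\<lambda>x::(real^'n) \<times> real. B / snd x) has_derivative (\<lambda>h. - (B / vs^2) * snd h)) (at sst)"
proof -
  have "((\<lambda>v::real. B / v) has_real_derivative - (B / vs^2)) (at vs)"
    using vs_pos by (auto intro!: derivative_eq_intros simp: power2_eq_square)
  then have d1: "((\<lambda>v::real. B / v) has_derivative (\<lambda>h. - (B / vs^2) * h)) (at vs)"
    unfolding has_field_derivative_def .
  have d0: "(snd has_derivative snd) (at sst)" by (rule bounded_linear_imp_has_derivative[OF bounded_linear_snd])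
  have "snd sst = vs" unfolding sst_def by simp
  then show ?thesis using has_derivative_compose[OF d0, of "\<lambda>v. B / v"] d1 by simp
qed

lemma pi_deriv: "((\<lambda>x. piw ce A (fst x) (snd x)) has_derivative dpi) (at sst)"
proof -
  have "((\<lambda>x. vsum ce - (vsum (fst x) + A / snd x)) has_derivative
      (\<lambda>h. 0 - (vsum (fst h) + - (A / vs^2) * snd h))) (at sst)"
    by (intro has_derivative_diff has_derivative_const has_derivative_add vsum_deriv inv_deriv)
  moreover have "(\<lambda>h. 0 - (vsum (fst h) + - (A / vs^2) * snd h)) = dpi"
    unfolding dpi_def by (rule ext) simp
  ultimately show ?thesis unfolding piw_def by simp
qed

definition Xf where "Xf x = - (L *v muv z ce (phiE z ce L p (fst x)) (fst x)) - p + (zeta * piw ce A (fst x) (snd x)) *\<^sub>R fst x"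

lemma Xf_sst: "Xf sst = 0"
proof -
  have "- (L *v muv z ce (phiE z ce L p cs) cs) - p = - (L *v muv z ce (phiE z ce L p cs) cs + p)" by simp
  then show ?thesis unfolding Xf_def sst_def using Lmu_cs piw_cs by simp
qed

lemma pw_sst: "piw ce A (fst sst) (snd sst) = 0" unfolding sst_def using piw_cs by simp

lemma Xf_deriv: "(Xf has_derivative (\<lambda>h. - (L *v dmu (fst h)) + (zeta * dpi h) *\<^sub>R cs)) (at sst)"
proof -
  have d1: "((\<lambda>x. L *v muv z ce (phiE z ce L p (fst x)) (fst x)) has_derivative (\<lambda>h. L *v dmu (fst h))) (at sst)"
    using has_derivative_compose[OF mu_deriv bounded_linear_imp_has_derivative[OF matrix_vector_mul_bounded_linear[of L]]] .
  have d2: "((\<lambda>x. zeta * piw ce A (fst x) (snd x)) has_derivative (\<lambda>h. zeta * dpi h)) (at sst)"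
    by (rule has_derivative_mult_right[OF pi_deriv])
  have d3: "(fst has_derivative fst) (at sst)" by (rule bounded_linear_imp_has_derivative[OF bounded_linear_fst])
  have "(Xf has_derivative (\<lambda>h. - (L *v dmu (fst h)) - 0 + ((zeta * piw ce A (fst sst) (snd sst)) *\<^sub>R fst h + (zeta * dpi h) *\<^sub>R fst sst))) (at sst)"
    unfolding Xf_def
    by (intro has_derivative_add has_derivative_diff has_derivative_minus d1 has_derivative_const
        has_derivative_scaleR d2 d3)
  moreover have "(\<lambda>h. - (L *v dmu (fst h)) - 0 + ((zeta * piw ce A (fst sst) (snd sst)) *\<^sub>R fst h + (zeta * dpi h) *\<^sub>R fst sst))
      = (\<lambda>h. - (L *v dmu (fst h)) + (zeta * dpi h) *\<^sub>R cs)"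
    using pw_sst by (simp add: sst_def)
  ultimately show ?thesis by simp
qed

lemma PLfield_eq: "PLfield z ce A L p zeta = (\<lambda>x. ((1 / snd x) *\<^sub>R Xf x, - zeta * piw ce A (fst x) (snd x)))"
  unfolding PLfield_def Xf_def by (rule ext) (simp add: case_prod_unfold Let_def)

lemma field_deriv: "(PLfield z ce A L p zeta has_derivative Fd) (at sst)"
proof -
  have d1: "((\<lambda>x::(real^'n) \<times> real. 1 / snd x) has_derivative (\<lambda>h. - (1 / vs^2) * snd h)) (at sst)"
    by (rule inv_deriv)
  have "((\<lambda>x. ((1 / snd x) *\<^sub>R Xf x, - zeta * piw ce A (fst x) (snd x))) has_derivative
      (\<lambda>h. ((1 / snd sst) *\<^sub>R (- (L *v dmu (fst h)) + (zeta * dpi h) *\<^sub>R cs) + (- (1 / vs^2) * snd h) *\<^sub>R Xf sst,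
            - zeta * dpi h))) (at sst)"
    by (intro has_derivative_Pair has_derivative_scaleR d1 Xf_deriv has_derivative_mult_right pi_deriv)
  moreover have "(\<lambda>h. ((1 / snd sst) *\<^sub>R (- (L *v dmu (fst h)) + (zeta * dpi h) *\<^sub>R cs) + (- (1 / vs^2) * snd h) *\<^sub>R Xf sst,
            - zeta * dpi h)) = Fd"
    unfolding Fd_def Xf_sst by (rule ext) (simp add: sst_def)
  ultimately show ?thesis unfolding PLfield_eq by simp
qed

end


context PL begin

definition Wm :: "(real^'n) \<times> real \<Rightarrow> (real^'n) \<times> real" where
  "Wm w = ((\<chi> k. sqrt (vs / cs $ k) * fst w $ k), sqrt A / vs * snd w)"

definition dg :: "(real^'n) \<times> real \<Rightarrow> real" where
  "dg w = z \<bullet> fst w - zi * A / vs^2 * snd w"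

lemma Wm_inner: "Wm x \<bullet> Wm y = vs * (fst x \<bullet> dgam (fst y)) + A / vs^2 * snd x * snd y"
proof -
  have a: "(\<chi> k. sqrt (vs / cs $ k) * fst x $ k) \<bullet> (\<chi> k. sqrt (vs / cs $ k) * fst y $ k)
      = vs * (fst x \<bullet> dgam (fst y))"
    unfolding inner_vec_def dgam_def sum_distrib_left
  proof (rule sum.cong)
    fix k
    have h: "sqrt (vs / cs $ k) * sqrt (vs / cs $ k) = vs / cs $ k"
      using vs_pos cs_pos[of k] by simp
    have "(sqrt (vs / cs $ k) * fst x $ k) * (sqrt (vs / cs $ k) * fst y $ k)
        = (sqrt (vs / cs $ k) * sqrt (vs / cs $ k)) * (fst x $ k * fst y $ k)" by (simp only: mult_ac)
    also have "\<dots> = vs * (fst x $ k * (fst y $ k / cs $ k))" unfolding h by simp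
    finally show "(\<chi> k. sqrt (vs / cs $ k) * fst x $ k) $ k \<bullet> (\<chi> k. sqrt (vs / cs $ k) * fst y $ k) $ k =
        vs * (fst x $ k \<bullet> (\<chi> k. fst y $ k / cs $ k) $ k)"
      by simp
  qed simp
  have "sqrt A * sqrt A = A" using A_pos by simp
  then have b: "(sqrt A / vs * snd x) * (sqrt A / vs * snd y) = A / vs^2 * snd x * snd y"
    by (simp add: power2_eq_square field_simps)
  show ?thesis unfolding Wm_def inner_Pair using a b by simp
qed

lemma dgam_sym: "a \<bullet> dgam b = dgam a \<bullet> b"
  unfolding dgam_def inner_vec_def by (rule sum.cong) auto

lemma cs_dgam: "cs \<bullet> dgam b = vsum b"
  unfolding dgam_def inner_vec_def vsum_def using cs_pos by (intro sum.cong) (auto simp: less_imp_neq[symmetric])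

lemma zLdmu: "z \<bullet> (L *v dmu a) = 0"
proof -
  have "z \<bullet> (L *v dmu a) = z \<bullet> (L *v dgam a) + dphi a * dz"
    unfolding dmu_def dz_def by (simp add: mv_add mv_scale inner_add_right)
  then show ?thesis unfolding dphi_def using dz_pos by simp
qed

lemma Fd_inner: "Wm (Fd u) \<bullet> Wm w = - (dmu (fst u) \<bullet> (L *v dmu (fst w))) - zeta * dpi u * dpi w"
proof -
  let ?a = "fst u" and ?b = "fst w"
  have "Wm (Fd u) \<bullet> Wm w = vs * (fst (Fd u) \<bullet> dgam ?b) + A / vs^2 * snd (Fd u) * snd w"
    by (rule Wm_inner)
  also have "vs * (fst (Fd u) \<bullet> dgam ?b) = (- (L *v dmu ?a) + (zeta * dpi u) *\<^sub>R cs) \<bullet> dgam ?b"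
    unfolding Fd_def using vs_pos by simp
  also have "\<dots> = - ((L *v dmu ?a) \<bullet> dgam ?b) + zeta * dpi u * vsum ?b"
    by (simp add: inner_add_left inner_diff_left cs_dgam)
  also have "(L *v dmu ?a) \<bullet> dgam ?b = dmu ?a \<bullet> (L *v dgam ?b)" by (rule L_symm[symmetric])
  also have "dgam ?b = dmu ?b - dphi ?b *\<^sub>R z" unfolding dmu_def by simp
  also have "dmu ?a \<bullet> (L *v (dmu ?b - dphi ?b *\<^sub>R z)) = dmu ?a \<bullet> (L *v dmu ?b) - dphi ?b * (dmu ?a \<bullet> (L *v z))"
    by (simp add: mv_diff mv_scale inner_diff_right)
  also have "dmu ?a \<bullet> (L *v z) = 0"
  proof -
    have "dmu ?a \<bullet> (L *v z) = (L *v dmu ?a) \<bullet> z" by (rule L_symm)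
    also have "\<dots> = z \<bullet> (L *v dmu ?a)" by (rule inner_commute)
    also have "\<dots> = 0" by (rule zLdmu)
    finally show ?thesis .
  qed
  finally have "Wm (Fd u) \<bullet> Wm w = - (dmu ?a \<bullet> (L *v dmu ?b)) + zeta * dpi u * vsum ?b + A / vs^2 * snd (Fd u) * snd w"
    by simp
  also have "\<dots> = - (dmu ?a \<bullet> (L *v dmu ?b)) - zeta * dpi u * dpi w"
    unfolding Fd_def dpi_def by (simp add: algebra_simps)
  finally show ?thesis .
qed

lemma Fd_sym: "Wm (Fd u) \<bullet> Wm w = Wm u \<bullet> Wm (Fd w)"
proof -
  have "dmu (fst u) \<bullet> (L *v dmu (fst w)) = (L *v dmu (fst u)) \<bullet> dmu (fst w)" by (rule L_symm)
  also have "\<dots> = dmu (fst w) \<bullet> (L *v dmu (fst u))" by (rule inner_commute)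
  finally have e: "dmu (fst u) \<bullet> (L *v dmu (fst w)) = dmu (fst w) \<bullet> (L *v dmu (fst u))" .
  show ?thesis unfolding inner_commute[of "Wm u"] Fd_inner e by simp
qed

lemma Fd_nonpos: "Wm (Fd w) \<bullet> Wm w \<le> 0"
proof -
  have "0 \<le> dmu (fst w) \<bullet> (L *v dmu (fst w))" using L_pd by (metis inner_zero_left order_refl less_imp_le)
  moreover have "0 \<le> zeta * (dpi w * dpi w)" using zeta_pos by simp
  then have "0 \<le> zeta * dpi w * dpi w" by (simp add: mult.assoc)
  ultimately show ?thesis unfolding Fd_inner by simp
qed

definition Z2 where "Z2 = (\<Sum>k\<in>UNIV. (z $ k)^2 * cs $ k)"

lemma Z2_pos: "Z2 > 0"
proof -
  obtain k where k: "z $ k \<noteq> 0" using exists_nz by blast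
  have "0 < (z $ k)^2 * cs $ k" using k cs_pos[of k] by simp
  also have "\<dots> \<le> Z2" unfolding Z2_def
  proof (rule member_le_sum)
    fix i assume "i \<in> UNIV - {k}"
    show "0 \<le> (z $ i)^2 * cs $ i" using cs_pos[of i] by simp
  qed simp_all
  finally show ?thesis .
qed

lemma kernel:
  assumes m: "dmu (fst w) = 0" and pi0: "dpi w = 0" and g0: "dg w = 0"
  shows "w = 0"
proof -
  define a where "a = fst w"
  define b where "b = snd w"
  define ph where "ph = dphi a"
  have ak: "a $ k = - ph * z $ k * cs $ k" for k
  proof -
    have "(dgam a + ph *\<^sub>R z) $ k = 0" using m unfolding dmu_def a_def ph_def by simp
    then have "a $ k / cs $ k + ph * z $ k = 0" unfolding dgam_def by simp
    then show ?thesis using cs_pos[of k] by (simp add: field_simps)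
  qed
  have va: "vsum a = - ph * (z \<bullet> cs)"
    unfolding vsum_def inner_vec_def ak sum_distrib_left by (rule sum.cong) simp_all
  have za: "z \<bullet> a = - ph * Z2"
    unfolding Z2_def inner_vec_def ak sum_distrib_left by (rule sum.cong) (simp_all add: power2_eq_square)
  have zc: "z \<bullet> cs = - zi * A / vs" by (rule z_cs)
  have e1: "- vsum a + A / vs^2 * b = 0" using pi0 unfolding dpi_def a_def b_def .
  have e2: "z \<bullet> a - zi * A / vs^2 * b = 0" using g0 unfolding dg_def a_def b_def .
  have "A / vs^2 * b = ph * zi * A / vs" using e1 va zc by (simp add: algebra_simps)
  then have bb: "b = ph * zi * vs" using vs_pos A_pos by (simp add: field_simps power2_eq_square)
  have "- ph * Z2 - zi * A / vs^2 * (ph * zi * vs) = 0" using e2 za bb by simp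
  then have "ph * (Z2 + zi^2 * A / vs) = 0" using vs_pos by (simp add: field_simps power2_eq_square)
  moreover have "Z2 + zi^2 * A / vs > 0" using Z2_pos A_pos vs_pos
    by (simp add: add_pos_nonneg)
  ultimately have ph0: "ph = 0" by simp
  have "a = 0" using ph0 ak by (simp add: vec_eq_iff)
  moreover have "b = 0" using bb ph0 by simp
  ultimately show ?thesis unfolding a_def b_def by (simp add: prod_eq_iff)
qed

lemma Fd_dg: "dg (Fd w) = 0"
proof -
  have "z \<bullet> fst (Fd w) = (1 / vs) * (- (z \<bullet> (L *v dmu (fst w))) + zeta * dpi w * (z \<bullet> cs))"
    unfolding Fd_def by (simp add: inner_add_right inner_diff_right)
  also have "\<dots> = (1 / vs) * (zeta * dpi w * (- zi * A / vs))" unfolding zLdmu z_cs by simp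
  finally have "z \<bullet> fst (Fd w) = (1 / vs) * (zeta * dpi w * (- zi * A / vs))" .
  then show ?thesis unfolding dg_def using vs_pos by (simp add: Fd_def field_simps power2_eq_square)
qed

lemma Fd_zero_imp: assumes "Wm (Fd w) \<bullet> Wm w = 0" shows "dmu (fst w) = 0" "dpi w = 0"
proof -
  have h1: "0 \<le> dmu (fst w) \<bullet> (L *v dmu (fst w))" using L_pd by (metis inner_zero_left order_refl less_imp_le)
  have h2: "0 \<le> zeta * (dpi w * dpi w)" using zeta_pos by simp
  have "dmu (fst w) \<bullet> (L *v dmu (fst w)) + zeta * (dpi w * dpi w) = 0"
    using assms unfolding Fd_inner by (simp add: algebra_simps)
  then have "dmu (fst w) \<bullet> (L *v dmu (fst w)) = 0" "zeta * (dpi w * dpi w) = 0" using h1 h2 by linarith+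
  then have z1: "dmu (fst w) \<bullet> (L *v dmu (fst w)) = 0" and z2: "zeta * (dpi w * dpi w) = 0" by blast+
  show "dmu (fst w) = 0" using L_pd z1 by (metis less_irrefl)
  show "dpi w = 0" using z2 zeta_pos by simp
qed

lemma Fd_linear: "linear Fd"
  using field_deriv has_derivative_bounded_linear bounded_linear.linear by blast

lemma Wm_linear: "linear Wm"
  by (rule linearI) (simp_all add: Wm_def vec_eq_iff algebra_simps add_divide_distrib)

lemma Wm_inj: "Wm x = 0 \<Longrightarrow> x = 0"
proof -
  assume h: "Wm x = 0"
  have "\<forall>k. fst x $ k = 0"
  proof
    fix k
    have "fst (Wm x) $ k = 0" using h by simp
    then have "sqrt (vs / cs $ k) * fst x $ k = 0" unfolding Wm_def by simp
    moreover have "sqrt (vs / cs $ k) > 0" using vs_pos cs_pos[of k] by simp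
    ultimately show "fst x $ k = 0" using vs_pos cs_pos[of k] by simp
  qed
  moreover have "snd (Wm x) = 0" using h by simp
  then have "sqrt A / vs * snd x = 0" unfolding Wm_def by simp
  then have "snd x = 0" using A_pos vs_pos by simp
  ultimately show "x = 0" by (simp add: prod_eq_iff vec_eq_iff)
qed

lemma tangent_eq: "PLtangent z A zi sst = {w. dg w = 0}"
  unfolding PLtangent_def dg_def sst_def by auto

lemma diag: "diag_neg_on Fd (PLtangent z A zi sst)"
proof -
  have sT: "subspace {w. dg w = 0}"
    unfolding subspace_def dg_def by (auto simp: inner_add_right algebra_simps add_divide_distrib)
  have MT: "Fd ` {w. dg w = 0} \<subseteq> {w. dg w = 0}" using Fd_dg by auto
  have sym: "\<forall>x\<in>{w. dg w = 0}. \<forall>y\<in>{w. dg w = 0}. Wm (Fd x) \<bullet> Wm y = Wm x \<bullet> Wm (Fd y)"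
    using Fd_sym by blast
  have neg: "\<forall>x\<in>{w. dg w = 0}. x \<noteq> 0 \<longrightarrow> Wm (Fd x) \<bullet> Wm x < 0"
  proof (intro ballI impI)
    fix x assume "x \<in> {w. dg w = 0}" "x \<noteq> 0"
    then show "Wm (Fd x) \<bullet> Wm x < 0"
      using Fd_nonpos[of x] Fd_zero_imp[of x] kernel[of x] by force
  qed
  show ?thesis unfolding diag_neg_on_def tangent_eq
    using MT diag_lemma[OF Fd_linear Wm_linear Wm_inj sT MT sym neg] by blast
qed

end


context PL begin

definition Gc :: "(real^'n) \<times> real \<Rightarrow> real" where "Gc y = snd y * (z \<bullet> fst y)"

lemma Gc_deriv: "(Gc has_derivative (\<lambda>h. snd h * (z \<bullet> fst y) + snd y * (z \<bullet> fst h))) (at y)"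
proof -
  have d1: "((\<lambda>y::(real^'n)\<times>real. z \<bullet> fst y) has_derivative (\<lambda>h. z \<bullet> fst h)) (at y)"
    by (rule bounded_linear_imp_has_derivative)
       (rule bounded_linear_inner_right_comp[OF bounded_linear_fst])
  have d2: "(snd has_derivative snd) (at y)" by (rule bounded_linear_imp_has_derivative[OF bounded_linear_snd])
  have "(Gc has_derivative (\<lambda>h. snd y * (z \<bullet> fst h) + snd h * (z \<bullet> fst y))) (at y)"
    unfolding Gc_def using has_derivative_mult[OF d2 d1] by simp
  then show ?thesis by (simp add: add.commute)
qed

lemma Gc_field: assumes "y \<in> PLdom"
  shows "snd (PLfield z ce A L p zeta y) * (z \<bullet> fst y) + snd y * (z \<bullet> fst (PLfield z ce A L p zeta y)) = 0"
proof -
  obtain c v where y: "y = (c, v)" by (cases y)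
  have v: "v > 0" using assms unfolding y PLdom_def by auto
  define ph where "ph = phiE z ce L p c"
  define pw where "pw = piw ce A c v"
  have zmu: "z \<bullet> (L *v muv z ce ph c) + z \<bullet> p = 0"
  proof -
    have "z \<bullet> (L *v muv z ce ph c) + z \<bullet> p = z \<bullet> (L *v gam ce c + p) + ph * dz"
      unfolding muv_def dz_def by (simp add: mv_add mv_scale inner_add_right)
    then show ?thesis unfolding ph_def phiE_def using dz_pos unfolding dz_def by simp
  qed
  have "snd (PLfield z ce A L p zeta y) = - zeta * pw" unfolding PLfield_def y pw_def by (simp add: Let_def)
  moreover have "fst (PLfield z ce A L p zeta y) = (1 / v) *\<^sub>R (- (L *v muv z ce ph c) - p + (zeta * pw) *\<^sub>R c)"
    unfolding PLfield_def y pw_def ph_def by (simp add: Let_def)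
  ultimately have "snd (PLfield z ce A L p zeta y) * (z \<bullet> fst y) + snd y * (z \<bullet> fst (PLfield z ce A L p zeta y))
      = - zeta * pw * (z \<bullet> c) + (- (z \<bullet> (L *v muv z ce ph c)) - z \<bullet> p + zeta * pw * (z \<bullet> c))"
    using v unfolding y by (simp add: inner_add_right inner_diff_right)
  also have "\<dots> = 0" using zmu by simp
  finally show ?thesis .
qed

lemma conservation:
  assumes fI: "fwd_interval I" and sol: "is_sol_on (PLfield z ce A L p zeta) PLdom I x"
    and x0: "x 0 \<in> PLS z A zi"
  shows "\<forall>t\<in>I. x t \<in> PLS z A zi"
proof -
  note Ip = fwd_interval_props[OF fI]
  have "\<forall>t\<in>I. ((\<lambda>t. Gc (x t)) has_derivative (\<lambda>h. 0)) (at t within I)"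
  proof
    fix t assume tI: "t \<in> I"
    have xd: "(x has_derivative (\<lambda>h. h *\<^sub>R PLfield z ce A L p zeta (x t))) (at t within I)"
      using sol tI unfolding is_sol_on_def has_vector_derivative_def by auto
    have xD: "x t \<in> PLdom" using sol tI unfolding is_sol_on_def by auto
    have "((\<lambda>t. Gc (x t)) has_derivative (\<lambda>h. snd (h *\<^sub>R PLfield z ce A L p zeta (x t)) * (z \<bullet> fst (x t))
        + snd (x t) * (z \<bullet> fst (h *\<^sub>R PLfield z ce A L p zeta (x t))))) (at t within I)"
      by (rule has_derivative_compose[OF xd Gc_deriv])
    moreover have "(\<lambda>h. snd (h *\<^sub>R PLfield z ce A L p zeta (x t)) * (z \<bullet> fst (x t))
        + snd (x t) * (z \<bullet> fst (h *\<^sub>R PLfield z ce A L p zeta (x t)))) = (\<lambda>h. 0)"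
    proof
      fix h
      have "snd (h *\<^sub>R PLfield z ce A L p zeta (x t)) * (z \<bullet> fst (x t))
        + snd (x t) * (z \<bullet> fst (h *\<^sub>R PLfield z ce A L p zeta (x t)))
        = h * (snd (PLfield z ce A L p zeta (x t)) * (z \<bullet> fst (x t)) + snd (x t) * (z \<bullet> fst (PLfield z ce A L p zeta (x t))))"
        by (simp add: algebra_simps)
      then show "snd (h *\<^sub>R PLfield z ce A L p zeta (x t)) * (z \<bullet> fst (x t))
        + snd (x t) * (z \<bullet> fst (h *\<^sub>R PLfield z ce A L p zeta (x t))) = 0"
        using Gc_field[OF xD] by simp
    qed
    ultimately show "((\<lambda>t. Gc (x t)) has_derivative (\<lambda>h. 0)) (at t within I)" by simp
  qed
  then obtain C where C: "\<forall>t\<in>I. Gc (x t) = C"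
    using has_derivative_zero_constant[OF Ip(2)] by metis
  have G0: "Gc (x 0) = - zi * A"
  proof -
    obtain c v where "x 0 = (c, v)" by (cases "x 0")
    then show ?thesis using x0 unfolding PLS_def PLdom_def Gc_def by (auto simp: field_simps)
  qed
  show ?thesis
  proof
    fix t assume tI: "t \<in> I"
    have "Gc (x t) = - zi * A" using C tI Ip(1) G0 by auto
    moreover have "x t \<in> PLdom" using sol tI unfolding is_sol_on_def by auto
    moreover obtain c v where "x t = (c, v)" by (cases "x t")
    ultimately show "x t \<in> PLS z A zi" unfolding PLS_def PLdom_def Gc_def by (auto simp: field_simps)
  qed
qed

lemma Wm_bounds: obtains Bw m where "Bw > 0" "m > 0" "\<And>w. norm (Wm w) \<le> Bw * norm w" "\<And>w. m * norm w \<le> norm (Wm w)"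
proof -
  obtain Bw where Bw: "Bw > 0" "\<And>w. norm (Wm w) \<le> Bw * norm w"
    using linear_bounded_pos[OF Wm_linear] by blast
  have "inj Wm" using linear_injective_0[OF Wm_linear] Wm_inj by blast
  then obtain m where m: "m > 0" "\<And>w. m * norm w \<le> norm (Wm w)"
    using linear_inj_bounded_below_pos[OF Wm_linear] by blast
  show ?thesis using that Bw m by blast
qed

definition Dq :: "(real^'n) \<times> real \<Rightarrow> real" where
  "Dq w = - (Wm (Fd w) \<bullet> Wm w) + (dg w)^2"

lemma Dq_pos: "w \<noteq> 0 \<Longrightarrow> Dq w > 0"
proof -
  assume w: "w \<noteq> 0"
  have a: "0 \<le> - (Wm (Fd w) \<bullet> Wm w)" using Fd_nonpos[of w] by simp
  have b: "0 \<le> (dg w)^2" by simp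
  show "Dq w > 0"
  proof (rule ccontr)
    assume "\<not> Dq w > 0"
    then have s: "- (Wm (Fd w) \<bullet> Wm w) + (dg w)^2 \<le> 0" unfolding Dq_def by simp
    then have "Wm (Fd w) \<bullet> Wm w = 0" using a b by linarith
    moreover have "(dg w)^2 = 0" using s a b by linarith
    then have "dg w = 0" by simp
    ultimately show False using Fd_zero_imp kernel w by metis
  qed
qed

lemma dg_linear: "linear dg"
  by (rule linearI) (simp_all add: dg_def inner_add_right algebra_simps add_divide_distrib)

lemma Dq_scale: "Dq (c *\<^sub>R w) = c^2 * Dq w"
proof -
  have "Fd (c *\<^sub>R w) = c *\<^sub>R Fd w" using Fd_linear by (simp add: linear_scale)
  moreover have "Wm (c *\<^sub>R u) = c *\<^sub>R Wm u" for u using Wm_linear by (simp add: linear_scale)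
  moreover have "dg (c *\<^sub>R w) = c * dg w" using dg_linear by (simp add: linear_scale)
  ultimately show ?thesis unfolding Dq_def by (simp add: power2_eq_square algebra_simps)
qed

lemma Dq_cont: "continuous_on UNIV Dq"
proof -
  have cF: "continuous_on UNIV Fd" and cW: "continuous_on UNIV Wm" and cg: "continuous_on UNIV dg"
    using Fd_linear Wm_linear dg_linear linear_continuous_on linear_conv_bounded_linear by blast+
  show ?thesis unfolding Dq_def
    by (intro continuous_intros continuous_on_compose2[OF cW] continuous_on_compose2[OF cF]
        continuous_on_compose2[OF cg]) auto
qed

lemma Dq_bound: obtains k0 where "k0 > 0" "\<And>w. k0 * (norm w)^2 \<le> Dq w"
proof -
  have ne: "sphere (0::(real^'n)\<times>real) 1 \<noteq> {}"
  proof -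
    have "(0::real^'n, 1::real) \<in> sphere 0 1" by simp
    then show ?thesis by blast
  qed
  obtain w0 where w0: "w0 \<in> sphere 0 1" and wmin: "\<forall>y\<in>sphere 0 1. Dq w0 \<le> Dq y"
    using continuous_attains_inf[OF compact_sphere ne continuous_on_subset[OF Dq_cont]] by blast
  have "w0 \<noteq> 0" using w0 by auto
  then have k0: "Dq w0 > 0" using Dq_pos by blast
  have "Dq w0 * (norm w)^2 \<le> Dq w" for w
  proof (cases "w = 0")
    case True then show ?thesis using Dq_scale[of 0 w] by simp
  next
    case False
    define u where "u = (1 / norm w) *\<^sub>R w"
    have "u \<in> sphere 0 1" unfolding u_def using False by simp
    then have "Dq w0 \<le> Dq u" using wmin by blast
    also have "Dq u = (1 / norm w)^2 * Dq w" unfolding u_def by (rule Dq_scale)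
    finally have "Dq w0 \<le> (1 / norm w)^2 * Dq w" .
    then have "Dq w0 * (norm w)^2 \<le> (1 / norm w)^2 * Dq w * (norm w)^2"
      by (simp add: mult_right_mono)
    also have "\<dots> = Dq w" using False by (simp add: power2_eq_square field_simps)
    finally show ?thesis .
  qed
  then show ?thesis using that k0 by blast
qed

definition Cg where "Cg = 2 * \<bar>zi\<bar> * A / vs^3"

lemma dg_S:
  assumes xS: "x \<in> PLS z A zi" and small: "norm (x - sst) \<le> vs / 2"
  shows "\<bar>dg (x - sst)\<bar> \<le> Cg * (norm (x - sst))^2"
proof -
  obtain c v where x: "x = (c, v)" by (cases x)
  have vpos: "v > 0" and zc: "z \<bullet> c = - zi * A / v" using xS unfolding x PLS_def PLdom_def
    by (auto simp: eq_neg_iff_add_eq_0)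
  have vd: "\<bar>v - vs\<bar> \<le> norm (x - sst)" unfolding x sst_def
    by (metis fst_diff snd_diff norm_snd_le prod.collapse real_norm_def snd_conv)
  then have vlow: "v \<ge> vs / 2" using small by linarith
  have "dg (x - sst) = z \<bullet> c - z \<bullet> cs - zi * A / vs^2 * (v - vs)"
    unfolding dg_def x sst_def by (simp add: inner_diff_right)
  also have "\<dots> = - zi * A * (v - vs)^2 / (v * vs^2)"
    unfolding zc z_cs using vpos vs_pos by (simp add: field_simps power2_eq_square)
  finally have e: "\<bar>dg (x - sst)\<bar> = \<bar>zi\<bar> * A * (v - vs)^2 / (v * vs^2)"
    using A_pos vpos vs_pos by (simp add: abs_mult)
  have "\<bar>zi\<bar> * A * (v - vs)^2 / (v * vs^2) \<le> \<bar>zi\<bar> * A * (v - vs)^2 / (vs / 2 * vs^2)"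
    using vlow vs_pos A_pos by (intro divide_left_mono mult_nonneg_nonneg mult_mono) auto
  also have "\<dots> = Cg * (v - vs)^2" unfolding Cg_def using vs_pos by (simp add: field_simps power3_eq_cube power2_eq_square)
  also have "\<dots> \<le> Cg * (norm (x - sst))^2"
  proof (rule mult_left_mono)
    show "(v - vs)^2 \<le> (norm (x - sst))^2" using vd by (metis abs_ge_zero power2_abs power_mono)
    show "0 \<le> Cg" unfolding Cg_def using A_pos vs_pos by simp
  qed
  finally show ?thesis using e by simp
qed

lemma field_sst: "PLfield z ce A L p zeta sst = 0"
  unfolding PLfield_eq using Xf_sst pw_sst by (simp add: zero_prod_def)

lemma field_approx:
  assumes "e > 0"
  obtains r where "r > 0" "\<And>y. norm (y - sst) < r \<Longrightarrow> norm (PLfield z ce A L p zeta y - Fd (y - sst)) \<le> e * norm (y - sst)"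
  using field_deriv assms unfolding has_derivative_at_alt field_sst by force

lemma lyap_ineq:
  obtains r0 k1 where "r0 > 0" "k1 > 0"
    "\<And>x. x \<in> PLS z A zi \<Longrightarrow> norm (x - sst) < r0 \<Longrightarrow>
       Wm (PLfield z ce A L p zeta x) \<bullet> Wm (x - sst) \<le> - k1 * (norm (x - sst))^2"
proof -
  obtain Bw m where Bw: "Bw > 0" "m > 0" "\<And>w. norm (Wm w) \<le> Bw * norm w" "\<And>w. m * norm w \<le> norm (Wm w)"
    using Wm_bounds by blast
  obtain k0 where k0: "k0 > 0" "\<And>w. k0 * (norm w)^2 \<le> Dq w" using Dq_bound by blast
  define e where "e = k0 / (4 * Bw^2)"
  have epos: "e > 0" unfolding e_def using k0 Bw by simp
  obtain r where r: "r > 0" "\<And>y. norm (y - sst) < r \<Longrightarrow> norm (PLfield z ce A L p zeta y - Fd (y - sst)) \<le> e * norm (y - sst)"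
    using field_approx[OF epos] by blast
  define r0 where "r0 = min r (min (vs / 2) (min 1 (k0 / (4 * (Cg^2 + 1)))))"
  have "0 < 4 * (Cg^2 + 1)" by (simp add: add_nonneg_pos)
  then have "0 < k0 / (4 * (Cg^2 + 1))" using k0 by simp
  then have r0pos: "r0 > 0" unfolding r0_def using r vs_pos k0 by simp
  have main: "Wm (PLfield z ce A L p zeta x) \<bullet> Wm (x - sst) \<le> - (k0 / 2) * (norm (x - sst))^2"
    if xS: "x \<in> PLS z A zi" and xs: "norm (x - sst) < r0" for x
  proof -
    define w where "w = x - sst"
    define E where "E = PLfield z ce A L p zeta x - Fd w"
    have nw: "norm w < r0" using xs unfolding w_def .
    have nwr: "norm w < r" "norm w \<le> vs / 2" "norm w < 1" "norm w < k0 / (4 * (Cg^2 + 1))"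
      using nw unfolding r0_def by auto
    have E: "norm E \<le> e * norm w" unfolding E_def w_def using r(2) nwr(1) unfolding w_def by blast
    have split: "Wm (PLfield z ce A L p zeta x) = Wm (Fd w) + Wm E"
      unfolding E_def using Wm_linear by (simp add: linear_add[symmetric])
    have t1: "Wm (Fd w) \<bullet> Wm w \<le> - k0 * (norm w)^2 + (dg w)^2"
      using k0(2)[of w] unfolding Dq_def by simp
    have dgw: "\<bar>dg w\<bar> \<le> Cg * (norm w)^2" unfolding w_def using dg_S[OF xS] nwr(2) unfolding w_def by blast
    have Cg0: "Cg \<ge> 0" unfolding Cg_def using A_pos vs_pos by simp
    have "(dg w)^2 \<le> (Cg * (norm w)^2)^2"
      using dgw by (metis abs_ge_zero power2_abs power_mono)
    also have "\<dots> = Cg^2 * (norm w)^2 * (norm w)^2" by (simp add: power2_eq_square)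
    also have "\<dots> \<le> Cg^2 * (norm w)^2 * (k0 / (4 * (Cg^2 + 1)))"
    proof (rule mult_left_mono)
      have "(norm w)^2 \<le> norm w" using nwr(3) by (simp add: power2_eq_square mult_left_le_one_le)
      then show "(norm w)^2 \<le> k0 / (4 * (Cg^2 + 1))" using nwr(4) by linarith
    qed simp
    also have "\<dots> \<le> (norm w)^2 * (k0 / 4)"
    proof -
      have p: "0 < Cg^2 + 1" by (simp add: add_nonneg_pos)
      have q: "Cg^2 / (Cg^2 + 1) \<le> 1" using p by (simp add: divide_le_eq_1)
      have "Cg^2 * (k0 / (4 * (Cg^2 + 1))) = (k0 / 4) * (Cg^2 / (Cg^2 + 1))" by (simp add: field_simps)
      also have "\<dots> \<le> (k0 / 4) * 1" using q k0(1) by (intro mult_left_mono) auto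
      finally have f: "Cg^2 * (k0 / (4 * (Cg^2 + 1))) \<le> k0 / 4" by simp
      have "(norm w)^2 * (Cg^2 * (k0 / (4 * (Cg^2 + 1)))) \<le> (norm w)^2 * (k0 / 4)"
        by (rule mult_left_mono[OF f]) simp
      then show ?thesis by (simp only: mult_ac)
    qed
    finally have t2: "(dg w)^2 \<le> k0 / 4 * (norm w)^2" by (simp add: mult.commute)
    have "Wm E \<bullet> Wm w \<le> norm (Wm E) * norm (Wm w)" by (rule norm_cauchy_schwarz)
    also have "\<dots> \<le> (Bw * norm E) * (Bw * norm w)"
      using Bw(1) by (intro mult_mono Bw(3)) auto
    also have "\<dots> \<le> (Bw * (e * norm w)) * (Bw * norm w)"
      using E Bw(1) by (intro mult_right_mono mult_left_mono) auto
    also have "\<dots> = k0 / 4 * (norm w)^2" unfolding e_def using Bw(1) by (simp add: field_simps power2_eq_square)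
    finally have t3: "Wm E \<bullet> Wm w \<le> k0 / 4 * (norm w)^2" .
    have "Wm (PLfield z ce A L p zeta x) \<bullet> Wm w = Wm (Fd w) \<bullet> Wm w + Wm E \<bullet> Wm w"
      unfolding split by (simp add: inner_add_left)
    also have "\<dots> \<le> - (k0 / 2) * (norm w)^2" using t1 t2 t3 by linarith
    finally show ?thesis unfolding w_def .
  qed
  have "k0 / 2 > 0" using k0 by simp
  then show ?thesis using that[OF r0pos _ main] by blast
qed

lemma V_deriv:
  assumes xd: "(x has_vector_derivative PLfield z ce A L p zeta (x t)) (at t within I)"
  shows "((\<lambda>t. Wm (x t - sst) \<bullet> Wm (x t - sst)) has_real_derivative
           2 * (Wm (PLfield z ce A L p zeta (x t)) \<bullet> Wm (x t - sst))) (at t within I)"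
proof -
  let ?v = "PLfield z ce A L p zeta (x t)"
  have bW: "bounded_linear Wm" using Wm_linear linear_conv_bounded_linear by blast
  have gd: "((\<lambda>y. y - sst) has_derivative (\<lambda>h. h)) (at y)" for y
    by (auto intro!: derivative_eq_intros)
  have fd: "((\<lambda>y. Wm (y - sst)) has_derivative (\<lambda>h. Wm h)) (at y)" for y
    using bounded_linear.has_derivative[OF bW gd] .
  have Qd: "((\<lambda>y. Wm (y - sst) \<bullet> Wm (y - sst)) has_derivative
      (\<lambda>h. Wm (x t - sst) \<bullet> Wm h + Wm h \<bullet> Wm (x t - sst))) (at (x t))"
    by (rule has_derivative_inner[OF fd fd])
  have xd': "(x has_derivative (\<lambda>h. h *\<^sub>R ?v)) (at t within I)"
    using xd unfolding has_vector_derivative_def .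
  have "((\<lambda>t. Wm (x t - sst) \<bullet> Wm (x t - sst)) has_derivative
      (\<lambda>h. Wm (x t - sst) \<bullet> Wm (h *\<^sub>R ?v) + Wm (h *\<^sub>R ?v) \<bullet> Wm (x t - sst))) (at t within I)"
    by (rule has_derivative_compose[OF xd' Qd])
  moreover have "(\<lambda>h. Wm (x t - sst) \<bullet> Wm (h *\<^sub>R ?v) + Wm (h *\<^sub>R ?v) \<bullet> Wm (x t - sst))
      = (\<lambda>h. 2 * (Wm ?v \<bullet> Wm (x t - sst)) * h)"
  proof
    fix h
    have "Wm (h *\<^sub>R ?v) = h *\<^sub>R Wm ?v" using Wm_linear by (simp add: linear_scale)
    then show "Wm (x t - sst) \<bullet> Wm (h *\<^sub>R ?v) + Wm (h *\<^sub>R ?v) \<bullet> Wm (x t - sst)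
      = 2 * (Wm ?v \<bullet> Wm (x t - sst)) * h" by (simp add: inner_commute algebra_simps)
  qed
  ultimately show ?thesis unfolding has_field_derivative_def by simp
qed

lemma stab_main:
  obtains \<delta> C \<kappa> where "\<delta> > 0" "\<kappa> > 0" "C \<ge> 0"
    "\<And>I x t. fwd_interval I \<Longrightarrow> is_sol_on (PLfield z ce A L p zeta) PLdom I x \<Longrightarrow> x 0 \<in> PLS z A zi
      \<Longrightarrow> dist (x 0) sst < \<delta> \<Longrightarrow> t \<in> I \<Longrightarrow> dist (x t) sst \<le> C * exp (- \<kappa> * t) * dist (x 0) sst"
proof -
  obtain r0 k1 where r0: "r0 > 0" "k1 > 0"
    "\<And>x. x \<in> PLS z A zi \<Longrightarrow> norm (x - sst) < r0 \<Longrightarrow>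
       Wm (PLfield z ce A L p zeta x) \<bullet> Wm (x - sst) \<le> - k1 * (norm (x - sst))^2"
    using lyap_ineq by blast
  obtain Bw m where Bw: "Bw > 0" "m > 0" "\<And>w. norm (Wm w) \<le> Bw * norm w" "\<And>w. m * norm w \<le> norm (Wm w)"
    using Wm_bounds by blast
  define \<kappa> where "\<kappa> = 2 * k1 / Bw^2"
  define \<rho> where "\<rho> = (m * r0)^2"
  define \<delta> where "\<delta> = m * r0 / Bw"
  have kpos: "\<kappa> > 0" unfolding \<kappa>_def using r0 Bw by simp
  have dpos: "\<delta> > 0" unfolding \<delta>_def using r0 Bw by simp
  have main: "dist (x t) sst \<le> (Bw / m) * exp (- (\<kappa> / 2) * t) * dist (x 0) sst"
    if fI: "fwd_interval I" and sol: "is_sol_on (PLfield z ce A L p zeta) PLdom I x"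
      and x0: "x 0 \<in> PLS z A zi" and d0: "dist (x 0) sst < \<delta>" and tI: "t \<in> I" for I x t
  proof -
    note Ip = fwd_interval_props[OF fI]
    have xS: "\<forall>t\<in>I. x t \<in> PLS z A zi" by (rule conservation[OF fI sol x0])
    define V where "V t = Wm (x t - sst) \<bullet> Wm (x t - sst)" for t
    define V' where "V' t = 2 * (Wm (PLfield z ce A L p zeta (x t)) \<bullet> Wm (x t - sst))" for t
    have Vn: "V t = (norm (Wm (x t - sst)))^2" for t unfolding V_def by (simp add: power2_norm_eq_inner)
    have der: "(V has_real_derivative V' t) (at t within I)" if "t \<in> I" for t
      unfolding V_def V'_def
      by (rule V_deriv) (use sol that in \<open>auto simp: is_sol_on_def\<close>)
    have dec: "V' t \<le> - \<kappa> * V t" if tI: "t \<in> I" and Vt: "V t < \<rho>" for t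
    proof -
      define w where "w = x t - sst"
      have "norm w < r0"
      proof (rule ccontr)
        assume "\<not> norm w < r0"
        then have "m * r0 \<le> m * norm w" using Bw(2) by simp
        also have "\<dots> \<le> norm (Wm w)" by (rule Bw(4))
        finally have "(m * r0)^2 \<le> (norm (Wm w))^2" using r0 Bw by (intro power_mono) auto
        then show False using Vt Vn[of t] unfolding \<rho>_def w_def by simp
      qed
      then have l: "Wm (PLfield z ce A L p zeta (x t)) \<bullet> Wm w \<le> - k1 * (norm w)^2"
        using r0(3) xS tI unfolding w_def by blast
      have "V t \<le> (Bw * norm w)^2" unfolding Vn w_def using Bw(3) by (intro power_mono) auto
      then have "k1 * V t \<le> k1 * (Bw * norm w)^2" using r0(2) by (intro mult_left_mono) auto
      then have "(2 / Bw^2) * (k1 * V t) \<le> (2 / Bw^2) * (k1 * (Bw * norm w)^2)"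
        by (rule mult_left_mono) simp
      moreover have "(2 / Bw^2) * (k1 * V t) = \<kappa> * V t" unfolding \<kappa>_def by simp
      moreover have "(2 / Bw^2) * (k1 * (Bw * norm w)^2) = 2 * k1 * (norm w)^2"
        using Bw(1) by (simp add: power_mult_distrib)
      ultimately have "\<kappa> * V t \<le> 2 * k1 * (norm w)^2" by simp
      then show ?thesis unfolding V'_def using l unfolding w_def by linarith
    qed
    have V0: "V 0 < \<rho>"
    proof -
      have "norm (Wm (x 0 - sst)) \<le> Bw * norm (x 0 - sst)" by (rule Bw(3))
      also have "\<dots> < Bw * \<delta>" using d0 Bw(1) by (simp add: dist_norm)
      also have "\<dots> = m * r0" unfolding \<delta>_def using Bw(1) by simp
      finally have "norm (Wm (x 0 - sst)) < m * r0" .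
      then show ?thesis unfolding Vn \<rho>_def by (intro power_strict_mono) auto
    qed
    have Vnn: "0 \<le> V t" for t unfolding Vn by simp
    have Vt: "V t \<le> V 0 * exp (- \<kappa> * t)"
      by (rule lyap_exp[OF fI der dec V0 Vnn kpos tI])
    have "(m * norm (x t - sst))^2 \<le> V t" unfolding Vn using Bw by (intro power_mono) auto
    also have "\<dots> \<le> V 0 * exp (- \<kappa> * t)" by (rule Vt)
    also have "\<dots> \<le> (Bw * norm (x 0 - sst))^2 * exp (- \<kappa> * t)"
      unfolding Vn using Bw by (intro mult_right_mono power_mono) auto
    also have "\<dots> = (Bw * norm (x 0 - sst) * exp (- (\<kappa> / 2) * t))^2"
    proof -
      have "exp (- \<kappa> * t) = (exp (- (\<kappa> / 2) * t))^2"
        by (simp add: power2_eq_square exp_add[symmetric])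
      then show ?thesis by (simp add: power_mult_distrib)
    qed
    finally have sq: "(m * norm (x t - sst))^2 \<le> (Bw * norm (x 0 - sst) * exp (- (\<kappa> / 2) * t))^2" .
    have nn: "0 \<le> Bw * norm (x 0 - sst) * exp (- (\<kappa> / 2) * t)" using Bw(1) by simp
    have "m * norm (x t - sst) \<le> Bw * norm (x 0 - sst) * exp (- (\<kappa> / 2) * t)"
      by (rule power2_le_imp_le[OF sq nn])
    then have "norm (x t - sst) * m \<le> Bw * norm (x 0 - sst) * exp (- (\<kappa> / 2) * t)"
      by (simp add: mult.commute)
    then have "norm (x t - sst) \<le> (Bw * norm (x 0 - sst) * exp (- (\<kappa> / 2) * t)) / m"
      using Bw(2) by (simp add: pos_le_divide_eq)
    also have "(Bw * norm (x 0 - sst) * exp (- (\<kappa> / 2) * t)) / m = (Bw / m) * exp (- (\<kappa> / 2) * t) * norm (x 0 - sst)"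
      by simp
    finally show ?thesis by (simp add: dist_norm)
  qed
  have "\<kappa> / 2 > 0" using kpos by simp
  moreover have "Bw / m \<ge> 0" using Bw by simp
  ultimately show ?thesis using that[OF dpos] main by blast
qed


end

lemma exp_decay_lim: "0 < (k::real) \<Longrightarrow> ((\<lambda>t. C * exp (- k * t) * a) \<longlongrightarrow> 0) at_top"
proof -
  assume k: "0 < k"
  have "filterlim (\<lambda>t. k * t) at_top at_top"
    using k by (intro filterlim_tendsto_pos_mult_at_top[OF tendsto_const k filterlim_ident])
  then have "filterlim (\<lambda>t. - (k * t)) at_bot at_top"
    by (simp add: filterlim_uminus_at_bot)
  then have "((\<lambda>t. exp (- (k * t))) \<longlongrightarrow> 0) at_top"
    using exp_at_bot filterlim_compose by blast
  then have "((\<lambda>t. C * exp (- k * t) * a) \<longlongrightarrow> C * 0 * a) at_top"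
    by (intro tendsto_intros) simp
  then show ?thesis by simp
qed

theorem proposition5:
  fixes z ce p :: "real^'n" and L :: "real^'n^'n" and A zi zeta :: real
  assumes N2: "CARD('n) \<ge> 2"
    and z_nz: "z \<noteq> 0"
    and ce_pos: "\<forall>k. 0 < ce $ k"
    and ce_neutral: "(\<Sum>k\<in>UNIV. z $ k * ce $ k) = 0"
    and A_pos: "0 < A"
    and L_sym: "transpose L = L"
    and L_pd: "\<forall>x. x \<noteq> 0 \<longrightarrow> 0 < x \<bullet> (L *v x)"
    and zeta_pos: "0 < zeta"
    and fmin_neg: "fPL z ce L p (phi_min z ce L p) < 0"
  shows "\<exists>s. PLsteady z ce A zi L p s
           \<and> (\<forall>s'. PLsteady z ce A zi L p s' \<longrightarrow> s' = s)
           \<and> asymp_stable_on (PLfield z ce A L p zeta) PLdom (PLS z A zi) s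
           \<and> exp_convergent_on (PLfield z ce A L p zeta) PLdom (PLS z A zi) s
           \<and> (\<exists>F'. (PLfield z ce A L p zeta has_derivative F') (at s)
                  \<and> diag_neg_on F' (PLtangent z A zi s))"
proof -
  interpret PL z ce p L A zi zeta
    by unfold_locales (use z_nz ce_pos ce_neutral A_pos L_sym L_pd zeta_pos fmin_neg in auto)
  obtain \<delta> \<kappa> C where dk: "\<delta> > 0" "\<kappa> > 0" "C \<ge> 0"
    and bnd: "\<And>I x t. fwd_interval I \<Longrightarrow> is_sol_on (PLfield z ce A L p zeta) PLdom I x \<Longrightarrow> x 0 \<in> PLS z A zi
      \<Longrightarrow> dist (x 0) sst < \<delta> \<Longrightarrow> t \<in> I \<Longrightarrow> dist (x t) sst \<le> C * exp (- \<kappa> * t) * dist (x 0) sst"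
    by (rule stab_main) blast
  have stable: "stable_on (PLfield z ce A L p zeta) PLdom (PLS z A zi) sst"
    unfolding stable_on_def
  proof (intro allI impI)
    fix e :: real assume e: "e > 0"
    define d where "d = min \<delta> (e / (C + 1))"
    have dpos: "d > 0" unfolding d_def using dk e by simp
    show "\<exists>\<delta>>0. \<forall>I x. fwd_interval I \<longrightarrow> is_sol_on (PLfield z ce A L p zeta) PLdom I x \<longrightarrow>
        x 0 \<in> PLS z A zi \<longrightarrow> dist (x 0) sst < \<delta> \<longrightarrow> (\<forall>t\<in>I. dist (x t) sst < e)"
    proof (intro exI[of _ d] conjI allI impI ballI dpos)
      fix I x t
      assume fI: "fwd_interval I" and sol: "is_sol_on (PLfield z ce A L p zeta) PLdom I x"
        and x0: "x 0 \<in> PLS z A zi" and dd: "dist (x 0) sst < d" and tI: "t \<in> I"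
      have t0: "0 \<le> t" using fwd_interval_props(3)[OF fI tI] .
      have "dist (x t) sst \<le> C * exp (- \<kappa> * t) * dist (x 0) sst"
        using bnd[OF fI sol x0 _ tI] dd unfolding d_def by simp
      also have "\<dots> \<le> C * 1 * dist (x 0) sst"
        using dk t0 by (intro mult_right_mono mult_left_mono) auto
      also have "\<dots> \<le> C * (e / (C + 1))"
      proof -
        have "dist (x 0) sst \<le> e / (C + 1)" using dd unfolding d_def by simp
        then have "C * dist (x 0) sst \<le> C * (e / (C + 1))" using dk(3) by (rule mult_left_mono)
        then show ?thesis by simp
      qed
      also have "\<dots> < e"
      proof -
        have "C * (e / (C + 1)) = e * (C / (C + 1))" by simp
        also have "\<dots> < e * 1" using e dk by (intro mult_strict_left_mono) auto
        finally show ?thesis by simp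
      qed
      finally show "dist (x t) sst < e" .
    qed
  qed
  have conv: "\<exists>\<delta>>0. \<forall>x. is_sol_on (PLfield z ce A L p zeta) PLdom {0..} x \<longrightarrow> x 0 \<in> PLS z A zi \<longrightarrow>
        dist (x 0) sst < \<delta> \<longrightarrow> (x \<longlongrightarrow> sst) at_top"
  proof (intro exI[of _ \<delta>] conjI allI impI dk(1))
    fix x assume sol: "is_sol_on (PLfield z ce A L p zeta) PLdom {0..} x"
      and x0: "x 0 \<in> PLS z A zi" and dd: "dist (x 0) sst < \<delta>"
    have fI: "fwd_interval {0..}" unfolding fwd_interval_def by simp
    have ev: "\<forall>\<^sub>F t in at_top. norm (x t - sst) \<le> C * exp (- \<kappa> * t) * dist (x 0) sst"
      using eventually_ge_at_top[of "0::real"]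
    proof (rule eventually_mono)
      fix t :: real assume "0 \<le> t"
      then show "norm (x t - sst) \<le> C * exp (- \<kappa> * t) * dist (x 0) sst"
        using bnd[OF fI sol x0 dd] by (simp add: dist_norm)
    qed
    have "((\<lambda>t. C * exp (- \<kappa> * t) * dist (x 0) sst) \<longlongrightarrow> 0) at_top"
      using dk(2) by (rule exp_decay_lim)
    then have "((\<lambda>t. x t - sst) \<longlongrightarrow> 0) at_top" by (rule Lim_null_comparison[OF ev])
    then show "(x \<longlongrightarrow> sst) at_top" by (simp add: LIM_zero_iff)
  qed
  have expc: "exp_convergent_on (PLfield z ce A L p zeta) PLdom (PLS z A zi) sst"
    unfolding exp_convergent_on_def
  proof -
    have P: "\<forall>I x. fwd_interval I \<longrightarrow> is_sol_on (PLfield z ce A L p zeta) PLdom I x \<longrightarrow>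
        x 0 \<in> PLS z A zi \<longrightarrow> dist (x 0) sst < \<delta> \<longrightarrow>
        (\<forall>t\<in>I. dist (x t) sst \<le> C * exp (- \<kappa> * t) * dist (x 0) sst)"
      using bnd by blast
    show "\<exists>\<delta>>0. \<exists>C \<kappa>. \<kappa> > 0 \<and> (\<forall>I x. fwd_interval I \<longrightarrow> is_sol_on (PLfield z ce A L p zeta) PLdom I x \<longrightarrow>
        x 0 \<in> PLS z A zi \<longrightarrow> dist (x 0) sst < \<delta> \<longrightarrow>
        (\<forall>t\<in>I. dist (x t) sst \<le> C * exp (- \<kappa> * t) * dist (x 0) sst))"
      by (rule exI[of _ \<delta>], rule conjI[OF dk(1)], rule exI[of _ C], rule exI[of _ \<kappa>], rule conjI[OF dk(2) P])
  qed
  show ?thesis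
  proof (intro exI[of _ sst] conjI allI impI)
    show "PLsteady z ce A zi L p sst" by (rule steady)
    show "\<And>s'. PLsteady z ce A zi L p s' \<Longrightarrow> s' = sst" by (rule steady_unique)
    show "asymp_stable_on (PLfield z ce A L p zeta) PLdom (PLS z A zi) sst"
      unfolding asymp_stable_on_def using stable conv by blast
    show "exp_convergent_on (PLfield z ce A L p zeta) PLdom (PLS z A zi) sst" by (rule expc)
    show "\<exists>F'. (PLfield z ce A L p zeta has_derivative F') (at sst) \<and> diag_neg_on F' (PLtangent z A zi sst)"
      using field_deriv diag by blast
  qed
qed


end
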